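(* Assume (A2), (A3) and that $V$ is irreducible. Let $n_0\in\mathcal N$ satisfy $\rho(B^{(n_0)})=\max_{n\in\mathcal N}\rho(B^{(n)})$. Then $$\psi(\rho(B^{(n_0)}))=\sup_{w\in\Pi_K^+}\inf_{p\in\mathcal P_+}G(w,p)=\inf_{p\in\mathcal P_+}\sup_{w\in\Pi_K^+}G(w,p).$$ Moreover, $(w^*,p^* )\in\Pi_K^+\times\mathcal P_+$ is a saddle point of $G$ if and only if $p^*=\bar p$ and $w^*\in\mathcal W$, where $\mathcal W=\{\sum_{n\in\mathcal N_0(\bar p)}c_nw^{(n)}: c_n\ge0,\ \sum_{n\in\mathcal N_0(\bar p)}c_n=1\}$ and, for each $n$, $w^{(n)}=y^{(n)}\circ x^{(n)}\in\Pi_K^+$ with $x^{(n)},y^{(n)}$ positive vectors satisfying $B^{(n)}x^{(n)}=\rho(B^{(n)})x^{(n)}$, $(B^{(n)})^Ty^{(n)}=\rho(B^{(n)})y^{(n)}$, $(y^{(n)})^Tx^{(n)}=1$.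
   Context: Network model: $K\ge 2$ links, $\mathcal K=\{1,\dots,K\}$. Power constraint set $\mathcal P=\{p\in\mathbb R_+^K: Cp\le\hat p\}$, where $C\in\{0,1\}^{N\times K}$ has at least one entry equal to $1$ in each column and $\hat p=(P_1,\dots,P_N)\in\mathbb R_{++}^N$; $\mathcal P_+=\mathcal P\cap\mathbb R_{++}^K$; $\mathcal N=\{1,\dots,N\}$; $c_n$ is the $n$-th row of $C$ as a column vector and $g_n(p)=c_n^Tp/P_n$. Gain matrix $V\in\mathbb R_+^{K\times K}$ with zero diagonal, noise vector $z\in\mathbb R_{++}^K$, $\mathrm{SIR}_k(p)=p_k/((Vp)_k+z_k)$. SIR targets $\gamma_k>0$, $\Gamma=\mathrm{diag}(\gamma_1,\dots,\gamma_K)$. $B^{(n)}=\Gamma V+\frac1{P_n}\Gamma z c_n^T$. $\mathcal N_0(p)=\{n\in\mathcal N: g_n(p)=\max_{m\in\mathcal N}g_m(p)=1\}$. $\bar p$ denotes the unique maximizer of $p\mapsto\min_k\mathrm{SIR}_k(p)/\gamma_k$ over $\mathcal P$. Assumption (A2): $\phi:\mathbb R_{++}\to\mathbb R$ is continuously differentiable and strictly increasing; $\mathcal Q=\phi(\mathbb R_{++})$. Assumption (A3): $\phi^{-1}:\mathcal Q\to\mathbb R_{++}$ is log-convex. $\psi(x)=-\phi(1/x)$ for $x>0$. $\Pi_K=\{x\in\mathbb R_+^K:\|x\|_1=1\}$, $\Pi_K^+=\Pi_K\cap\mathbb R_{++}^K$. $G:\Pi_K^+\times\mathcal P_+\to\mathbb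 R$, $G(w,p)=\sum_{k\in\mathcal K}w_k\psi(\gamma_k/\mathrm{SIR}_k(p))$. $\circ$ denotes the entrywise product; $\rho(\cdot)$ the spectral radius. *)

theory Defs
  imports "HOL-Analysis.Analysis" "HOL-Library.Extended_Real"
begin

definition cmatrix :: "real^'k^'k \<Rightarrow> complex^'k^'k" where
  "cmatrix A = (\<chi> i j. complex_of_real (A$i$j))"

definition eigenvalues_c :: "real^'k^'k \<Rightarrow> complex set" where
  "eigenvalues_c A = {l. \<exists>v::complex^'k. v \<noteq> 0 \<and> cmatrix A *v v = l *s v}"

definition spectral_radius :: "real^'k^'k \<Rightarrow> real" where
  "spectral_radius A = Max (cmod ` eigenvalues_c A)"

definition irreducible_mat :: "real^'k^'k \<Rightarrow> bool" where
  "irreducible_mat A \<longleftrightarrow> (\<forall>i j. (i, j) \<in> {(a, b). A$a$b > 0}\<^sup>+)"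

definition SIR :: "real^'k^'k \<Rightarrow> real^'k \<Rightarrow> real^'k \<Rightarrow> 'k \<Rightarrow> real" where
  "SIR V z p k = p$k / ((V *v p)$k + z$k)"

definition power_set_P :: "real^'k^'n \<Rightarrow> real^'n \<Rightarrow> (real^'k) set" where
  "power_set_P C phat = {p. (\<forall>k. 0 \<le> p$k) \<and> (\<forall>n. (C *v p)$n \<le> phat$n)}"

definition power_set_Pplus :: "real^'k^'n \<Rightarrow> real^'n \<Rightarrow> (real^'k) set" where
  "power_set_Pplus C phat = power_set_P C phat \<inter> {p. \<forall>k. 0 < p$k}"

definition simplex_plus :: "(real^'k) set" where
  "simplex_plus = {w. (\<forall>k. 0 < w$k) \<and> sum (\<lambda>k. w$k) UNIV = 1}"

definition gfun :: "real^'k^'n \<Rightarrow> real^'n \<Rightarrow> 'n \<Rightarrow> real^'k \<Rightarrow> real" where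
  "gfun C phat n p = (C$n \<bullet> p) / phat$n"

definition N0 :: "real^'k^'n \<Rightarrow> real^'n \<Rightarrow> real^'k \<Rightarrow> 'n set" where
  "N0 C phat p = {n. gfun C phat n p = Max (range (\<lambda>m. gfun C phat m p))
                     \<and> Max (range (\<lambda>m. gfun C phat m p)) = 1}"

definition Bmat :: "real^'k \<Rightarrow> real^'k^'k \<Rightarrow> real^'k \<Rightarrow> real^'k^'n \<Rightarrow> real^'n \<Rightarrow> 'n \<Rightarrow> real^'k^'k" where
  "Bmat gamma V z C phat n =
     (\<chi> i j. gamma$i * V$i$j + gamma$i * z$i * C$n$j / phat$n)"

definition psi :: "(real \<Rightarrow> real) \<Rightarrow> real \<Rightarrow> real" where
  "psi \<phi> x = - \<phi> (1 / x)"

definition Gfun :: "(real \<Rightarrow> real) \<Rightarrow> real^'k \<Rightarrow> real^'k^'k \<Rightarrow> real^'k \<Rightarrow> real^'k \<Rightarrow> real^'k \<Rightarrow> real" where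
  "Gfun \<phi> gamma V z w p = (\<Sum>k\<in>UNIV. w$k * psi \<phi> (gamma$k / SIR V z p k))"

definition perron_weight :: "real^'k^'k \<Rightarrow> real^'k" where
  "perron_weight B = (THE w. \<exists>x y. (\<forall>k. 0 < x$k) \<and> (\<forall>k. 0 < y$k)
       \<and> B *v x = spectral_radius B *s x
       \<and> transpose B *v y = spectral_radius B *s y
       \<and> y \<bullet> x = 1
       \<and> w = (\<chi> k. y$k * x$k))"

definition saddle_point :: "('a \<Rightarrow> 'b \<Rightarrow> real) \<Rightarrow> 'a set \<Rightarrow> 'b set \<Rightarrow> 'a \<Rightarrow> 'b \<Rightarrow> bool" where
  "saddle_point G W P w0 p0 \<longleftrightarrow> w0 \<in> W \<and> p0 \<in> P \<and>
     (\<forall>w\<in>W. \<forall>p\<in>P. G w p0 \<le> G w0 p0 \<and> G w0 p0 \<le> G w0 p)"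

end

theory Submission
  imports Defs
begin

lemma eig_indep:
  fixes M :: "complex^'k^'k" and ev :: "complex \<Rightarrow> complex^'k"
  assumes "finite L" "\<forall>l\<in>L. ev l \<noteq> 0 \<and> M *v ev l = l *s ev l"
  shows "vec.independent (ev ` L) \<and> inj_on ev L"
  using assms
proof (induction L rule: finite_induct)
  case empty
  then show ?case by (simp add: vec.independent_empty)
next
  case (insert m L)
  have IH: "vec.independent (ev ` L)" "inj_on ev L" using insert by auto
  have evm: "ev m \<noteq> 0" "M *v ev m = m *s ev m" using insert.prems by auto
  have notin: "ev m \<notin> vec.span (ev ` L)"
  proof
    assume "ev m \<in> vec.span (ev ` L)"
    then obtain u where u: "ev m = (\<Sum>v\<in>ev ` L. u v *s v)"
      using vec.span_finite[of "ev ` L"] insert.hyps(1) by auto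
    have u2: "ev m = (\<Sum>l\<in>L. u (ev l) *s ev l)"
      using u IH(2) by (simp add: sum.reindex)
    have "M *v ev m = (\<Sum>l\<in>L. u (ev l) *s (M *v ev l))"
      by (simp add: u2 vec.sum vec.scale)
    also have "\<dots> = (\<Sum>l\<in>L. (u (ev l) * l) *s ev l)"
      using insert.prems by (intro sum.cong) auto
    finally have e1: "m *s ev m = (\<Sum>l\<in>L. (u (ev l) * l) *s ev l)" using evm by simp
    have e2: "m *s ev m = (\<Sum>l\<in>L. (u (ev l) * m) *s ev l)"
      by (simp add: u2 vec.scale_sum_right mult.commute)
    have "(\<Sum>l\<in>L. (u (ev l) * (l - m)) *s ev l) = 0"
      using e1 e2 by (simp add: algebra_simps sum_subtractf vector_sub_rdistrib)
    hence z: "(\<Sum>v\<in>ev ` L. (u v * (inv_into L ev v - m)) *s v) = 0"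
      using IH(2) by (simp add: sum.reindex)
    have "\<forall>v\<in>ev ` L. u v * (inv_into L ev v - m) = 0"
    proof -
      have "\<forall>c. (\<Sum>v\<in>ev ` L. c v *s v) = 0 \<longrightarrow> (\<forall>v\<in>ev ` L. c v = 0)"
        using IH(1) unfolding vec.independent_explicit by blast
      from spec[OF this, of "\<lambda>v. u v * (inv_into L ev v - m)"] z show ?thesis by blast
    qed
    hence "\<forall>l\<in>L. u (ev l) = 0" using IH(2) insert.hyps(2)
      by (auto simp: inv_into_f_f)
    hence "ev m = 0" using u2 by simp
    thus False using evm by simp
  qed
  have "ev m \<notin> ev ` L" using notin vec.span_base by blast
  then show ?case using notin IH vec.independent_insertI by auto
qed

lemma finite_eig:
  fixes M :: "complex^'k^'k"
  shows "finite {l. \<exists>v. v \<noteq> 0 \<and> M *v v = l *s v}"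
proof (rule ccontr)
  let ?E = "{l. \<exists>v. v \<noteq> 0 \<and> M *v v = l *s v}"
  assume "infinite ?E"
  then obtain L where L: "L \<subseteq> ?E" "finite L" "card L = CARD('k) + 1"
    using infinite_arbitrarily_large by blast
  define ev where "ev l = (SOME v. v \<noteq> 0 \<and> M *v v = l *s v)" for l
  have "\<forall>l\<in>L. ev l \<noteq> 0 \<and> M *v ev l = l *s ev l"
  proof
    fix l assume "l \<in> L"
    hence "\<exists>v. v \<noteq> 0 \<and> M *v v = l *s v" using L(1) by auto
    from someI_ex[OF this] show "ev l \<noteq> 0 \<and> M *v ev l = l *s ev l" unfolding ev_def .
  qed
  from eig_indep[OF L(2) this] have "vec.independent (ev ` L)" "inj_on ev L" by auto
  hence "card (ev ` L) \<le> vec.dim (ev ` L)" using vec.independent_bound_general by blast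
  also have "\<dots> \<le> vec.dim (UNIV :: (complex^'k) set)" by (rule vec.dim_subset) simp
  also have "\<dots> = CARD('k)" by (simp add: vec.dim_UNIV card_cart_basis)
  finally show False using \<open>inj_on ev L\<close> L(3) by (simp add: card_image)
qed

lemma spectral_radius_pos_eigvec:
  fixes A :: "real^'k^'k"
  assumes nn: "\<forall>i j. 0 \<le> A$i$j" and xpos: "\<forall>i. 0 < x$i" and ev: "A *v x = r *s x"
  shows "spectral_radius A = r"
proof -
  have fin: "finite (eigenvalues_c A)" unfolding eigenvalues_c_def by (rule finite_eig)
  have r0: "0 \<le> r"
  proof -
    obtain i :: 'k where True by simp
    have "0 \<le> (A *v x)$i" using nn xpos
      by (auto simp: matrix_vector_mult_def less_imp_le intro!: sum_nonneg)
    hence "0 \<le> r * x$i" using ev by simp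
    thus ?thesis using xpos by (simp add: zero_le_mult_iff) (meson not_le xpos)
  qed
  define v :: "complex^'k" where "v = (\<chi> i. complex_of_real (x$i))"
  have v0: "v \<noteq> 0"
  proof
    assume "v = 0"
    obtain i :: 'k where True by simp
    have "v$i = 0" using \<open>v = 0\<close> by simp
    thus False using xpos[rule_format, of i] by (simp add: v_def)
  qed
  have "cmatrix A *v v = complex_of_real r *s v"
  proof -
    have "\<And>i. (cmatrix A *v v)$i = complex_of_real ((A *v x)$i)"
      by (simp add: cmatrix_def v_def matrix_vector_mult_def)
    thus ?thesis using ev by (simp add: vec_eq_iff v_def)
  qed
  hence rin: "complex_of_real r \<in> eigenvalues_c A" unfolding eigenvalues_c_def using v0 by blast
  have bound: "cmod l \<le> r" if l: "l \<in> eigenvalues_c A" for l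
  proof -
    obtain u where u0: "u \<noteq> 0" and ue: "cmatrix A *v u = l *s u"
      using l unfolding eigenvalues_c_def by blast
    define c where "c = Max (range (\<lambda>i. cmod (u$i) / x$i))"
    have "c \<in> range (\<lambda>i. cmod (u$i) / x$i)" unfolding c_def by (rule Max_in) auto
    then obtain i0 where i0: "c = cmod (u$i0) / x$i0" by auto
    have cj: "cmod (u$j) \<le> c * x$j" for j
    proof -
      have "cmod (u$j) / x$j \<le> c" unfolding c_def by (rule Max_ge) auto
      thus ?thesis using xpos[rule_format, of j] by (simp add: divide_le_eq)
    qed
    obtain j where j: "u$j \<noteq> 0" using u0 by (metis vec_eq_iff zero_index)
    have "0 < cmod (u$j) / x$j" using j xpos by simp
    also have "\<dots> \<le> c" unfolding c_def by (rule Max_ge) auto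
    finally have cpos: "0 < c" .
    have ui0: "0 < cmod (u$i0)" using i0 cpos xpos[rule_format, of i0]
      by (metis divide_eq_0_iff less_eq_real_def norm_ge_zero)
    have "cmod l * cmod (u$i0) = cmod ((cmatrix A *v u)$i0)" using ue by (simp add: norm_mult)
    also have "\<dots> = cmod (\<Sum>j\<in>UNIV. complex_of_real (A$i0$j) * u$j)"
      by (simp add: cmatrix_def matrix_vector_mult_def)
    also have "\<dots> \<le> (\<Sum>j\<in>UNIV. cmod (complex_of_real (A$i0$j) * u$j))" by (rule norm_sum)
    also have "\<dots> = (\<Sum>j\<in>UNIV. A$i0$j * cmod (u$j))"
      using nn by (intro sum.cong) (auto simp: norm_mult)
    also have "\<dots> \<le> (\<Sum>j\<in>UNIV. A$i0$j * (c * x$j))"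
      using nn cj by (intro sum_mono mult_left_mono) auto
    also have "\<dots> = c * (A *v x)$i0"
      by (simp add: matrix_vector_mult_def sum_distrib_left algebra_simps)
    also have "\<dots> = r * (c * x$i0)" using ev by simp
    also have "\<dots> = r * cmod (u$i0)" using i0 xpos[rule_format, of i0] by simp
    finally show ?thesis using ui0 by simp
  qed
  have "spectral_radius A = Max (cmod ` eigenvalues_c A)" by (simp add: spectral_radius_def)
  also have "\<dots> = r"
  proof (rule Max_eqI)
    show "r \<in> cmod ` eigenvalues_c A" using rin r0 by (metis image_eqI norm_of_real abs_of_nonneg)
  qed (use fin bound in auto)
  finally show ?thesis .
qed

lemma irred_zero_prop:
  fixes A :: "real^'k^'k" and q :: "real^'k"
  assumes irr: "irreducible_mat A" and nn: "\<forall>i j. 0 \<le> A$i$j" and q: "\<forall>i. 0 \<le> q$i"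
    and z: "\<forall>i. q$i = 0 \<longrightarrow> (A *v q)$i = 0" and i0: "q$i0 = 0"
  shows "q = 0"
proof -
  have stp: "q$b = 0" if "q$a = 0" "0 < A$a$b" for a b
  proof -
    have "(\<Sum>j\<in>UNIV. A$a$j * q$j) = 0" using z that(1) by (simp add: matrix_vector_mult_def)
    hence "\<forall>j\<in>UNIV. A$a$j * q$j = 0"
      by (subst sum_nonneg_eq_0_iff[symmetric]) (use nn q in auto)
    thus ?thesis using that(2) by force
  qed
  have "q$j = 0" if "(i0, j) \<in> {(a, b). A$a$b > 0}\<^sup>+" for j
    using that
  proof (induction rule: trancl_induct)
    case (base y) thus ?case using stp i0 by blast
  next
    case (step y w) thus ?case using stp by blast
  qed
  thus ?thesis using irr unfolding irreducible_mat_def by (simp add: vec_eq_iff)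
qed

lemma irred_col:
  fixes A :: "real^'k^'k"
  assumes irr: "irreducible_mat A"
  shows "\<exists>i. 0 < A$i$j"
proof -
  have "(j, j) \<in> {(a, b). A$a$b > 0}\<^sup>+" using irr unfolding irreducible_mat_def by blast
  thus ?thesis by (rule tranclE) auto
qed

lemma irred_transpose:
  fixes A :: "real^'k^'k"
  assumes irr: "irreducible_mat A"
  shows "irreducible_mat (transpose A)"
proof -
  have e: "{(a, b). transpose A$a$b > 0} = {(a, b). A$a$b > 0}\<inverse>"
    by (auto simp: transpose_def)
  show ?thesis using irr unfolding irreducible_mat_def e trancl_converse by blast
qed

lemma pos_eigvec_unique:
  fixes A :: "real^'k^'k"
  assumes nn: "\<forall>i j. 0 \<le> A$i$j" and irr: "irreducible_mat A"
    and x: "\<forall>i. 0 < x$i" "A *v x = r *s x"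
    and x': "\<forall>i. 0 \<le> x'$i" "A *v x' = r *s x'"
  shows "\<exists>c. x' = c *s x"
proof -
  define c where "c = Min (range (\<lambda>i. x'$i / x$i))"
  have "c \<in> range (\<lambda>i. x'$i / x$i)" unfolding c_def by (rule Min_in) auto
  then obtain i0 where i0: "c = x'$i0 / x$i0" by auto
  define q where "q = x' - c *s x"
  have qnn: "\<forall>i. 0 \<le> q$i"
  proof
    fix i
    have "c \<le> x'$i / x$i" unfolding c_def by (rule Min_le) auto
    thus "0 \<le> q$i" using x(1)[rule_format, of i] by (simp add: q_def le_divide_eq mult.commute)
  qed
  have qi0: "q$i0 = 0" using i0 x(1)[rule_format, of i0] by (simp add: q_def)
  have qev: "A *v q = r *s q"
    by (simp add: q_def matrix_vector_mult_diff_distrib x(2) x'(2) vec.scale algebra_simps)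
  have "q = 0" using irred_zero_prop[OF irr nn qnn _ qi0] qev by simp
  thus ?thesis by (auto simp: q_def)
qed

lemma pf_exists:
  fixes A :: "real^'k^'k"
  assumes nn: "\<forall>i j. 0 \<le> A$i$j" and irr: "irreducible_mat A"
  shows "\<exists>x. (\<forall>i. 0 < x$i) \<and> A *v x = spectral_radius A *s x"
proof -
  define S :: "(real^'k) set" where "S = {x. (\<forall>i. 0 \<le> x$i) \<and> sum (\<lambda>i. x$i) UNIV = 1}"
  define s where "s x = sum (\<lambda>i. (A *v x)$i) UNIV" for x :: "real^'k"
  define f where "f x = (1 / s x) *s (A *v x)" for x
  have spos: "0 < s x" if "x \<in> S" for x
  proof -
    obtain j where j: "0 < x$j"
    proof (rule ccontr)
      assume "\<not> thesis"
      hence "\<forall>j. \<not> 0 < x$j" using that by blast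
      hence "\<forall>j. x$j = 0" using \<open>x \<in> S\<close> unfolding S_def by (simp add: order.antisym not_less)
      thus False using \<open>x \<in> S\<close> unfolding S_def by simp
    qed
    obtain i where i: "0 < A$i$j" using irred_col[OF irr] by blast
    have nn2: "\<forall>a b. 0 \<le> A$a$b * x$b" using nn \<open>x \<in> S\<close> unfolding S_def by simp
    have "0 < A$i$j * x$j" using i j by simp
    also have "\<dots> \<le> (\<Sum>b\<in>UNIV. A$i$b * x$b)" by (rule member_le_sum) (use nn2 in auto)
    also have "\<dots> = (A *v x)$i" by (simp add: matrix_vector_mult_def)
    also have "\<dots> \<le> s x" unfolding s_def
      by (rule member_le_sum) (use nn2 in \<open>auto simp: matrix_vector_mult_def intro!: sum_nonneg\<close>)
    finally show ?thesis .
  qed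
  have compact: "compact S"
  proof -
    have cl: "closed S"
      unfolding S_def
      by (intro closed_Collect_conj closed_Collect_all closed_Collect_le closed_Collect_eq continuous_intros)
    have "S \<subseteq> cbox 0 (\<chi> i. 1)"
    proof
      fix x assume x: "x \<in> S"
      have "x$i \<le> 1" for i
      proof -
        have "x$i \<le> sum (\<lambda>i. x$i) UNIV" by (rule member_le_sum) (use x in \<open>auto simp: S_def\<close>)
        thus ?thesis using x by (simp add: S_def)
      qed
      thus "x \<in> cbox 0 (\<chi> i. 1)" using x by (auto simp: mem_box_cart S_def)
    qed
    hence "bounded S" using bounded_cbox bounded_subset by blast
    thus ?thesis using cl compact_eq_bounded_closed by blast
  qed
  have convex: "convex S"
    unfolding convex_def
  proof (intro ballI allI impI)
    fix x y :: "real^'k" and u v :: real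
    assume x: "x \<in> S" and y: "y \<in> S" and uv: "0 \<le> u" "0 \<le> v" "u + v = 1"
    have "\<forall>i. 0 \<le> (u *\<^sub>R x + v *\<^sub>R y)$i" using x y uv by (simp add: S_def)
    moreover have "sum (\<lambda>i. (u *\<^sub>R x + v *\<^sub>R y)$i) UNIV = u * sum (\<lambda>i. x$i) UNIV + v * sum (\<lambda>i. y$i) UNIV"
      by (simp add: sum.distrib sum_distrib_left)
    ultimately show "u *\<^sub>R x + v *\<^sub>R y \<in> S" using x y uv by (simp add: S_def)
  qed
  have ne: "S \<noteq> {}"
  proof -
    have "(\<chi> i. 1 / real CARD('k)) \<in> S" unfolding S_def by auto
    thus ?thesis by blast
  qed
  have cont: "continuous_on S f"
  proof -
    have lin: "continuous_on S (\<lambda>x. A *v x)"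
      by (rule matrix_vector_mult_linear_continuous_on)
    have cs: "continuous_on S s" unfolding s_def
      by (intro continuous_intros continuous_on_component lin)
    have "continuous_on S (\<lambda>x. (1 / s x) *\<^sub>R (A *v x))"
      by (intro continuous_intros cs lin) (use spos in force)
    thus ?thesis unfolding f_def scalar_mult_eq_scaleR .
  qed
  have fim: "f \<in> S \<rightarrow> S"
  proof
    fix x assume x: "x \<in> S"
    have "\<forall>i. 0 \<le> (A *v x)$i" using nn x
      by (auto simp: S_def matrix_vector_mult_def intro!: sum_nonneg)
    moreover have "sum (\<lambda>i. (f x)$i) UNIV = 1"
      using spos[OF x] by (simp add: f_def sum_divide_distrib[symmetric] s_def)
    ultimately show "f x \<in> S" using spos[OF x] by (auto simp: S_def f_def)
  qed
  obtain x where x: "x \<in> S" "f x = x" using brouwer[OF compact convex ne cont fim] by blast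
  have ev: "A *v x = s x *s x"
    using x(2) spos[OF x(1)] by (auto simp: f_def vec_eq_iff field_simps)
  have xnn: "\<forall>i. 0 \<le> x$i" using x by (simp add: S_def)
  have xpos: "\<forall>i. 0 < x$i"
  proof (rule ccontr)
    assume "\<not> (\<forall>i. 0 < x$i)"
    then obtain i where "x$i = 0" using xnn by (metis order_le_less)
    hence "x = 0" using irred_zero_prop[OF irr nn xnn, of i] ev by simp
    thus False using x by (simp add: S_def)
  qed
  have "spectral_radius A = s x" using spectral_radius_pos_eigvec[OF nn xpos ev] .
  thus ?thesis using xpos ev by auto
qed

lemma mv_nth: "(A *v x)$i = (\<Sum>j\<in>UNIV. A$i$j * x$j)"
  by (simp add: matrix_vector_mult_def)

lemma tmv_nth: "(transpose A *v x)$i = (\<Sum>j\<in>UNIV. A$j$i * x$j)"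
  by (simp add: matrix_vector_mult_def transpose_def)

lemma inner_real_vec: "(x::real^'k) \<bullet> y = (\<Sum>i\<in>UNIV. x$i * y$i)"
  by (simp add: inner_vec_def)

lemma left_pair:
  fixes B :: "real^'k^'k"
  assumes "transpose B *v y = r *s y"
  shows "y \<bullet> (B *v p) = r * (y \<bullet> p)"
proof -
  have "y \<bullet> (B *v p) = (\<Sum>i\<in>UNIV. \<Sum>j\<in>UNIV. y$i * (B$i$j * p$j))"
    by (simp add: inner_real_vec mv_nth sum_distrib_left)
  also have "\<dots> = (\<Sum>j\<in>UNIV. (\<Sum>i\<in>UNIV. B$i$j * y$i) * p$j)"
    by (subst sum.swap) (simp add: sum_distrib_left mult_ac)
  also have "\<dots> = (\<Sum>j\<in>UNIV. (transpose B *v y)$j * p$j)" by (simp only: tmv_nth)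
  also have "\<dots> = r * (y \<bullet> p)" using assms by (simp add: inner_real_vec sum_distrib_left algebra_simps)
  finally show ?thesis .
qed

lemma pos_dot_zero:
  fixes y q :: "real^'k"
  assumes "\<forall>i. 0 < y$i" "\<forall>i. 0 \<le> q$i" "y \<bullet> q = 0"
  shows "q = 0"
proof -
  have nn: "\<forall>i. 0 \<le> y$i * q$i" using assms by (metis less_imp_le mult_nonneg_nonneg)
  have "\<forall>i\<in>UNIV. y$i * q$i = 0"
    using assms nn by (subst sum_nonneg_eq_0_iff[symmetric]) (auto simp: inner_real_vec)
  thus ?thesis using assms(1) unfolding vec_eq_iff by (metis UNIV_I mult_eq_0_iff order_less_irrefl zero_index)
qed

lemma pos_dot_pos:
  fixes y q :: "real^'k"
  assumes "\<forall>i. 0 < y$i" "\<forall>i. 0 \<le> q$i" "q \<noteq> 0"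
  shows "0 < y \<bullet> q"
proof -
  have "0 \<le> y \<bullet> q" using assms unfolding inner_real_vec
    by (intro sum_nonneg) (simp add: less_imp_le)
  moreover have "y \<bullet> q \<noteq> 0" using pos_dot_zero assms by blast
  ultimately show ?thesis by simp
qed

lemma irred_row:
  fixes A :: "real^'k^'k"
  assumes irr: "irreducible_mat A"
  shows "\<exists>j. 0 < A$i$j"
proof -
  have "(i, i) \<in> {(a, b). A$a$b > 0}\<^sup>+" using irr unfolding irreducible_mat_def by blast
  thus ?thesis by (rule converse_tranclE) auto
qed

lemma pos_row_mv:
  fixes A :: "real^'k^'k"
  assumes nn: "\<forall>i j. 0 \<le> A$i$j" and row: "0 < A$i$j" and p: "\<forall>i. 0 < p$i"
  shows "0 < (A *v p)$i"
proof -
  have "0 < A$i$j * p$j" using row p by simp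
  also have "\<dots> \<le> (\<Sum>j\<in>UNIV. A$i$j * p$j)"
    by (rule member_le_sum) (use nn p in \<open>auto simp: less_imp_le\<close>)
  finally show ?thesis by (simp add: mv_nth)
qed

lemma FK:
  fixes B :: "real^'k^'k"
  assumes nn: "\<forall>i j. 0 \<le> B$i$j" and x: "\<forall>i. 0 < x$i" and y: "\<forall>i. 0 < y$i"
    and ex: "B *v x = r *s x" and ey: "transpose B *v y = r *s y" and r: "0 < r"
    and p: "\<forall>i. 0 < p$i"
  shows "(\<Sum>k\<in>UNIV. (y$k * x$k) * ln ((B *v p)$k / p$k)) \<ge> (\<Sum>k\<in>UNIV. y$k * x$k) * ln r"
proof -
  define u where "u j = p$j / x$j" for j
  define P where "P k j = B$k$j * x$j / (r * x$k)" for k j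
  have upos: "0 < u j" for j using p x by (simp add: u_def)
  have Pnn: "0 \<le> P k j" for k j using nn x r by (simp add: P_def less_imp_le)
  have Psum: "(\<Sum>j\<in>UNIV. P k j) = 1" for k
  proof -
    have "(\<Sum>j\<in>UNIV. P k j) = (B *v x)$k / (r * x$k)"
      by (simp add: P_def mv_nth sum_divide_distrib)
    also have "\<dots> = 1" using ex x[rule_format, of k] r by simp
    finally show ?thesis .
  qed
  have key: "ln ((B *v p)$k / p$k) \<ge> ln r + (\<Sum>j\<in>UNIV. P k j * (ln (u j) - ln (u k)))" for k
  proof -
    have e: "(B *v p)$k / p$k = r * (\<Sum>j\<in>UNIV. P k j * (u j / u k))"
    proof -
      have "(\<Sum>j\<in>UNIV. P k j * (u j / u k)) = (\<Sum>j\<in>UNIV. B$k$j * p$j / (r * p$k))"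
      proof (intro sum.cong refl)
        fix j
        have "x$j > 0" "x$k > 0" "p$j > 0" "p$k > 0" using x p by auto
        thus "P k j * (u j / u k) = B$k$j * p$j / (r * p$k)" using r by (simp add: P_def u_def field_simps)
      qed
      also have "\<dots> = (B *v p)$k / (r * p$k)" by (simp add: mv_nth sum_divide_distrib)
      finally show ?thesis using r p[rule_format, of k] by simp
    qed
    have "(\<Sum>j\<in>UNIV. P k j * ln (u j / u k)) \<le> ln (\<Sum>j\<in>UNIV. P k j *\<^sub>R (u j / u k))"
      by (rule concave_on_sum[OF _ _ ln_concave]) (use Psum Pnn upos in auto)
    hence "(\<Sum>j\<in>UNIV. P k j * (ln (u j) - ln (u k))) \<le> ln (\<Sum>j\<in>UNIV. P k j * (u j / u k))"
    proof -
      have un: "u j \<noteq> 0" for j using upos[of j] by linarith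
      have "(\<Sum>j\<in>UNIV. P k j * ln (u j / u k)) = (\<Sum>j\<in>UNIV. P k j * (ln (u j) - ln (u k)))"
        using un by (intro sum.cong refl) (simp add: ln_div)
      thus ?thesis using \<open>(\<Sum>j\<in>UNIV. P k j * ln (u j / u k)) \<le> _\<close> by simp
    qed
    moreover have "0 < (\<Sum>j\<in>UNIV. P k j * (u j / u k))"
    proof -
      have "(\<Sum>j\<in>UNIV. P k j * (u j / u k)) = (B *v p)$k / p$k / r" using e r by simp
      moreover obtain j where "0 < B$k$j"
      proof -
        have "0 < (B *v x)$k" using ex x r by simp
        hence "(\<Sum>j\<in>UNIV. B$k$j * x$j) \<noteq> 0" by (simp add: mv_nth)
        then obtain j where "B$k$j * x$j \<noteq> 0" by (meson sum.neutral)
        hence "B$k$j \<noteq> 0" by auto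
        hence "0 < B$k$j" using nn by (metis order_le_less)
        thus ?thesis using that by blast
      qed
      hence "0 < (B *v p)$k" using pos_row_mv[OF nn _ p] by blast
      ultimately show ?thesis using p r by simp
    qed
    ultimately show ?thesis using e r by (simp add: ln_mult)
  qed
  define w where "w k = y$k * x$k" for k
  have wnn: "0 \<le> w k" for k using x y by (simp add: w_def less_imp_le)
  have wP: "(\<Sum>k\<in>UNIV. w k * P k j) = w j" for j
  proof -
    have "(\<Sum>k\<in>UNIV. w k * P k j) = (\<Sum>k\<in>UNIV. B$k$j * y$k) * x$j / r"
    proof -
      have "(\<Sum>k\<in>UNIV. w k * P k j) = (\<Sum>k\<in>UNIV. B$k$j * y$k * x$j / r)"
      proof (intro sum.cong refl)
        fix k have "x$k > 0" using x by auto
        thus "w k * P k j = B$k$j * y$k * x$j / r" by (simp add: w_def P_def field_simps)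
      qed
      thus ?thesis by (simp add: sum_distrib_right sum_divide_distrib)
    qed
    also have "\<dots> = w j"
    proof -
      have "(\<Sum>k\<in>UNIV. B$k$j * y$k) = r * y$j"
        using arg_cong[OF ey, of "\<lambda>v. v$j"] unfolding tmv_nth by simp
      thus ?thesis using r by (simp add: w_def)
    qed
    finally show ?thesis .
  qed
  have zero: "(\<Sum>k\<in>UNIV. w k * (\<Sum>j\<in>UNIV. P k j * (ln (u j) - ln (u k)))) = 0"
  proof -
    have "(\<Sum>k\<in>UNIV. w k * (\<Sum>j\<in>UNIV. P k j * (ln (u j) - ln (u k))))
        = (\<Sum>k\<in>UNIV. \<Sum>j\<in>UNIV. w k * P k j * ln (u j)) - (\<Sum>k\<in>UNIV. w k * ln (u k) * (\<Sum>j\<in>UNIV. P k j))"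
      by (simp add: sum_distrib_left sum_subtractf[symmetric] algebra_simps)
    also have "(\<Sum>k\<in>UNIV. \<Sum>j\<in>UNIV. w k * P k j * ln (u j)) = (\<Sum>j\<in>UNIV. w j * ln (u j))"
      by (subst sum.swap) (simp add: sum_distrib_right[symmetric] wP)
    finally show ?thesis by (simp add: Psum)
  qed
  have "(\<Sum>k\<in>UNIV. w k * ln ((B *v p)$k / p$k)) \<ge> (\<Sum>k\<in>UNIV. w k * (ln r + (\<Sum>j\<in>UNIV. P k j * (ln (u j) - ln (u k)))))"
    by (intro sum_mono mult_left_mono key wnn)
  also have "(\<Sum>k\<in>UNIV. w k * (ln r + (\<Sum>j\<in>UNIV. P k j * (ln (u j) - ln (u k))))) = (\<Sum>k\<in>UNIV. w k) * ln r"
    using zero by (simp add: distrib_left sum.distrib sum_distrib_right)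
  finally show ?thesis by (simp add: w_def)
qed

lemma left_from_right:
  fixes A :: "real^'k^'k"
  assumes nn: "\<forall>i j. 0 \<le> A$i$j" and irr: "irreducible_mat A"
    and x: "\<forall>i. 0 < x$i" and ex: "A *v x = r *s x"
  shows "\<exists>y. (\<forall>i. 0 < y$i) \<and> transpose A *v y = r *s y"
proof -
  have nnT: "\<forall>i j. 0 \<le> transpose A$i$j" using nn by (simp add: transpose_def)
  obtain y where y: "\<forall>i. 0 < y$i" "transpose A *v y = spectral_radius (transpose A) *s y"
    using pf_exists[OF nnT irred_transpose[OF irr]] by blast
  have "y \<bullet> (A *v x) = spectral_radius (transpose A) * (y \<bullet> x)" by (rule left_pair[OF y(2)])
  moreover have "y \<bullet> (A *v x) = r * (y \<bullet> x)" using ex by (simp add: scalar_mult_eq_scaleR)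
  moreover have "0 < y \<bullet> x" using pos_dot_pos[OF y(1)] x
    by (metis less_imp_le vec_eq_iff zero_index less_irrefl)
  ultimately have "spectral_radius (transpose A) = r" by simp
  thus ?thesis using y by auto
qed

lemma jensen_psi:
  fixes \<phi> :: "real \<Rightarrow> real" and w a :: "'k::finite \<Rightarrow> real"
  assumes mono: "strict_mono_on {0<..} \<phi>"
    and A3: "convex_on (\<phi> ` {0<..}) (\<lambda>q. ln (the_inv_into {0<..} \<phi> q))"
    and w: "\<forall>k. 0 \<le> w k" "(\<Sum>k\<in>UNIV. w k) = 1"
    and a: "\<forall>k. 0 < a k" and rho: "0 < \<rho>"
    and s: "ln \<rho> \<le> (\<Sum>k\<in>UNIV. w k * ln (a k))"
  shows "psi \<phi> \<rho> \<le> (\<Sum>k\<in>UNIV. w k * psi \<phi> (a k))"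
proof -
  let ?Q = "\<phi> ` {0<..}"
  let ?h = "\<lambda>q. ln (the_inv_into {0<..} \<phi> q)"
  have inj: "inj_on \<phi> {0<..}" using mono strict_mono_on_imp_inj_on by blast
  have hphi: "?h (\<phi> x) = ln x" if "0 < x" for x
    using the_inv_into_f_f[OF inj] that by simp
  have convQ: "convex ?Q" using A3 unfolding convex_on_def by blast
  define q where "q k = \<phi> (1 / a k)" for k
  have qQ: "q k \<in> ?Q" for k using a by (simp add: q_def)
  have sQ: "(\<Sum>k\<in>UNIV. w k *\<^sub>R q k) \<in> ?Q"
    by (rule convex_sum[OF _ convQ]) (use w qQ in auto)
  then obtain x0 where x0: "0 < x0" "(\<Sum>k\<in>UNIV. w k *\<^sub>R q k) = \<phi> x0" by auto
  have "?h (\<Sum>k\<in>UNIV. w k *\<^sub>R q k) \<le> (\<Sum>k\<in>UNIV. w k * ?h (q k))"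
    by (rule convex_on_sum[OF _ _ A3]) (use w qQ in auto)
  also have "\<dots> = (\<Sum>k\<in>UNIV. w k * ln (1 / a k))"
    using a hphi by (simp add: q_def)
  also have "\<dots> = - (\<Sum>k\<in>UNIV. w k * ln (a k))"
  proof -
    have "(\<Sum>k\<in>UNIV. w k * ln (1 / a k)) = (\<Sum>k\<in>UNIV. - (w k * ln (a k)))"
    proof (intro sum.cong refl)
      fix k have "0 < a k" using a by auto
      thus "w k * ln (1 / a k) = - (w k * ln (a k))" by (simp add: ln_div)
    qed
    thus ?thesis by (simp add: sum_negf)
  qed
  also have "\<dots> \<le> - ln \<rho>" using s by simp
  finally have "?h (\<phi> x0) \<le> - ln \<rho>" using x0(2) by simp
  hence "ln x0 \<le> - ln \<rho>" using hphi[OF x0(1)] by simp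
  hence "ln x0 \<le> ln (1 / \<rho>)" using rho by (simp add: ln_div)
  hence "x0 \<le> 1 / \<rho>" using x0 rho by simp
  hence "\<phi> x0 \<le> \<phi> (1 / \<rho>)" using mono x0 rho
    by (intro strict_mono_on_leD[OF mono]) auto
  hence le: "(\<Sum>k\<in>UNIV. w k * q k) \<le> \<phi> (1 / \<rho>)" using x0(2) by simp
  have "(\<Sum>k\<in>UNIV. w k * psi \<phi> (a k)) = - (\<Sum>k\<in>UNIV. w k * q k)"
    by (simp add: psi_def q_def sum_negf[symmetric])
  thus ?thesis using le by (simp add: psi_def)
qed

locale model =
  fixes C :: "real^'k^'n" and phat :: "real^'n"
    and V :: "real^'k^'k" and z gamma :: "real^'k"
    and \<phi> :: "real \<Rightarrow> real" and pbar :: "real^'k" and n0 :: 'n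
  assumes K2: "CARD('k) \<ge> 2"
    and C01: "\<forall>n k. C$n$k = 0 \<or> C$n$k = 1"
    and Ccol: "\<forall>k. \<exists>n. C$n$k = 1"
    and phat_pos: "\<forall>n. 0 < phat$n"
    and V_nonneg: "\<forall>i j. 0 \<le> V$i$j"
    and V_diag: "\<forall>k. V$k$k = 0"
    and z_pos: "\<forall>k. 0 < z$k"
    and gamma_pos: "\<forall>k. 0 < gamma$k"
    and A2_deriv: "\<exists>\<phi>'. (\<forall>x>0. (\<phi> has_real_derivative \<phi>' x) (at x)) \<and> continuous_on {0<..} \<phi>'"
    and A2_mono: "strict_mono_on {0<..} \<phi>"
    and A3: "convex_on (\<phi> ` {0<..}) (\<lambda>q. ln (the_inv_into {0<..} \<phi> q))"
    and V_irred: "irreducible_mat V"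
    and pbar_in: "pbar \<in> power_set_P C phat"
    and pbar_max: "\<forall>p\<in>power_set_P C phat.
          (MIN k. SIR V z p k / gamma$k) \<le> (MIN k. SIR V z pbar k / gamma$k)"
    and n0_max: "\<forall>n. spectral_radius (Bmat gamma V z C phat n)
                     \<le> spectral_radius (Bmat gamma V z C phat n0)"
begin

abbreviation "B \<equiv> Bmat gamma V z C phat"
abbreviation "g \<equiv> gfun C phat"

lemma C_nn: "0 \<le> C$n$k" using C01 by (metis order_refl zero_le_one)

lemma g_sum: "g n p = (\<Sum>j\<in>UNIV. C$n$j * p$j) / phat$n"
  by (simp add: gfun_def inner_real_vec)

lemma g_scale: "g n (c *s p) = c * g n p"
  by (simp add: g_sum sum_distrib_left algebra_simps)

lemma g_nn: assumes "\<forall>j. 0 \<le> p$j" shows "0 \<le> g n p"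
  unfolding g_sum by (intro divide_nonneg_pos sum_nonneg mult_nonneg_nonneg) (use C_nn phat_pos assms in auto)

lemma Cv_nth: "(C *v p)$n = g n p * phat$n"
  using phat_pos[rule_format, of n] by (simp add: g_sum mv_nth)

lemma B_nth: "(B n *v p)$i = gamma$i * ((V *v p)$i + z$i * g n p)"
proof -
  have "(B n *v p)$i = (\<Sum>j\<in>UNIV. gamma$i * (V$i$j * p$j) + gamma$i * z$i / phat$n * (C$n$j * p$j))"
    by (simp add: Bmat_def mv_nth algebra_simps)
  also have "\<dots> = gamma$i * ((V *v p)$i + z$i * g n p)"
    by (simp add: sum.distrib mv_nth g_sum sum_distrib_left sum_divide_distrib mult_ac distrib_left)
  finally show ?thesis .
qed

lemma B_nn: "\<forall>i j. 0 \<le> B n$i$j"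
  using V_nonneg gamma_pos z_pos phat_pos C_nn
  by (simp add: Bmat_def less_imp_le)

lemma B_irr: "irreducible_mat (B n)"
proof -
  have "{(a, b). V$a$b > 0} \<subseteq> {(a, b). B n$a$b > 0}"
  proof (clarify)
    fix a b assume "0 < V$a$b"
    hence "0 < gamma$a * V$a$b" using gamma_pos by simp
    moreover have "0 \<le> gamma$a * z$a * C$n$b / phat$n"
      using gamma_pos z_pos phat_pos C_nn by (simp add: less_imp_le)
    ultimately show "0 < B n$a$b" by (simp add: Bmat_def)
  qed
  thus ?thesis using V_irred trancl_mono unfolding irreducible_mat_def by metis
qed

lemma B_pos: assumes "\<forall>i. 0 < p$i" shows "0 < (B n *v p)$i"
proof -
  obtain j where "0 < B n$i$j" using irred_row[OF B_irr] by blast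
  thus ?thesis using pos_row_mv[OF B_nn _ assms] by blast
qed


definition "r0 = spectral_radius (B n0)"

lemma r0_eig: obtains x0 where "\<forall>i. 0 < x0$i" "B n0 *v x0 = r0 *s x0"
  using pf_exists[OF B_nn B_irr] unfolding r0_def by blast

lemma r0_pos: "0 < r0"
proof -
  obtain x0 where x0: "\<forall>i. 0 < x0$i" "B n0 *v x0 = r0 *s x0" using r0_eig by blast
  obtain i :: 'k where True by simp
  have "0 < (B n0 *v x0)$i" using B_pos[OF x0(1)] .
  hence "0 < r0 * x0$i" using x0(2) by simp
  thus ?thesis using x0(1) by (simp add: zero_less_mult_iff) (meson not_less_iff_gr_or_eq x0(1))
qed

lemma g_pos_exists: assumes "\<forall>i. 0 < x$i" shows "\<exists>n. 0 < g n x"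
proof -
  obtain k :: 'k where True by simp
  obtain n where n: "C$n$k = 1" using Ccol by blast
  have "0 < C$n$k * x$k" using n assms by simp
  also have "\<dots> \<le> (\<Sum>j\<in>UNIV. C$n$j * x$j)"
    by (rule member_le_sum) (use C_nn assms in \<open>auto simp: less_imp_le\<close>)
  finally have "0 < (\<Sum>j\<in>UNIV. C$n$j * x$j)" .
  hence "0 < g n x" using phat_pos by (simp add: g_sum)
  thus ?thesis by blast
qed

lemma key_vec:
  obtains x1 ms y where "\<forall>i. 0 < x1$i" "\<forall>m. g m x1 \<le> 1" "g ms x1 = 1"
    "\<forall>i. gamma$i * ((V *v x1)$i + z$i) = r0 * x1$i"
    "\<forall>i. 0 < y$i" "transpose (B ms) *v y = r0 *s y"
proof -
  obtain x0 where x0: "\<forall>i. 0 < x0$i" "B n0 *v x0 = r0 *s x0" using r0_eig by blast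
  define gm where "gm = Max (range (\<lambda>m. g m x0))"
  have "gm \<in> range (\<lambda>m. g m x0)" unfolding gm_def by (rule Max_in) auto
  then obtain ms where ms: "g ms x0 = gm" by auto
  have gmpos: "0 < gm"
  proof -
    obtain n where "0 < g n x0" using g_pos_exists[OF x0(1)] by blast
    also have "g n x0 \<le> gm" unfolding gm_def by (rule Max_ge) auto
    finally show ?thesis .
  qed
  define x1 where "x1 = (1 / gm) *s x0"
  have x1pos: "\<forall>i. 0 < x1$i" using x0(1) gmpos by (simp add: x1_def)
  have gle: "\<forall>m. g m x1 \<le> 1"
  proof
    fix m
    have "g m x0 \<le> gm" unfolding gm_def by (rule Max_ge) auto
    thus "g m x1 \<le> 1" using gmpos by (simp add: x1_def g_scale)
  qed
  have gms: "g ms x1 = 1" using gmpos ms by (simp add: x1_def g_scale)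
  have ex1: "B n0 *v x1 = r0 *s x1"
    by (simp add: x1_def vec.scale x0(2) algebra_simps)
  obtain y where y: "\<forall>i. 0 < y$i" "transpose (B ms) *v y = spectral_radius (B ms) *s y"
  proof -
    obtain xm where xm: "\<forall>i. 0 < xm$i" "B ms *v xm = spectral_radius (B ms) *s xm"
      using pf_exists[OF B_nn B_irr] by blast
    show ?thesis using left_from_right[OF B_nn B_irr xm] that by blast
  qed
  define rm where "rm = spectral_radius (B ms)"
  have rmle: "rm \<le> r0" using n0_max unfolding rm_def r0_def by blast
  define q where "q = B ms *v x1 - r0 *s x1"
  have qnn: "\<forall>i. 0 \<le> q$i"
  proof
    fix i
    have "(B n0 *v x1)$i \<le> (B ms *v x1)$i"
      unfolding B_nth using gle gms z_pos gamma_pos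
      by (auto intro!: mult_left_mono simp: less_imp_le)
    thus "0 \<le> q$i" using ex1 by (simp add: q_def)
  qed
  have yx: "0 < y \<bullet> x1" using pos_dot_pos[OF y(1)] x1pos
    by (metis less_imp_le vec_eq_iff zero_index less_irrefl)
  have "y \<bullet> q = rm * (y \<bullet> x1) - r0 * (y \<bullet> x1)"
    using left_pair[OF y(2)] by (simp add: q_def inner_diff_right rm_def scalar_mult_eq_scaleR)
  moreover have "0 \<le> y \<bullet> q" using qnn y(1) unfolding inner_real_vec
    by (intro sum_nonneg) (simp add: less_imp_le)
  ultimately have "0 \<le> (rm - r0) * (y \<bullet> x1)" by (simp add: left_diff_distrib)
  hence "r0 \<le> rm" using yx by (simp add: zero_le_mult_iff)
  hence rm: "rm = r0" using rmle by simp
  hence "y \<bullet> q = 0" using \<open>y \<bullet> q = _\<close> by simp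
  hence "q = 0" using pos_dot_zero[OF y(1) qnn] by simp
  hence "B ms *v x1 = r0 *s x1" by (simp add: q_def)
  hence "\<forall>i. gamma$i * ((V *v x1)$i + z$i) = r0 * x1$i"
    using gms by (simp add: vec_eq_iff B_nth)
  thus ?thesis using that x1pos gle gms y rm unfolding rm_def by auto
qed


lemma den_pos: assumes "\<forall>j. 0 \<le> p$j" shows "0 < (V *v p)$k + z$k"
proof -
  have "0 \<le> (V *v p)$k" unfolding mv_nth using V_nonneg assms by (intro sum_nonneg) simp
  thus ?thesis using z_pos[rule_format, of k] by simp
qed

lemma P_g_le: assumes "p \<in> power_set_P C phat" shows "g m p \<le> 1"
proof -
  have "(C *v p)$m \<le> phat$m" using assms by (simp add: power_set_P_def)
  thus ?thesis using phat_pos[rule_format, of m] by (simp add: Cv_nth)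
qed

lemma unique_opt:
  assumes x1: "\<forall>i. 0 < x1$i" "g ms x1 = 1" "\<forall>i. gamma$i * ((V *v x1)$i + z$i) = r0 * x1$i"
    and y: "\<forall>i. 0 < y$i" "transpose (B ms) *v y = r0 *s y"
    and p: "p \<in> power_set_P C phat" and ge: "\<forall>k. 1/r0 \<le> SIR V z p k / gamma$k"
  shows "p = x1"
proof -
  have pnn: "\<forall>j. 0 \<le> p$j" using p by (simp add: power_set_P_def)
  have gp: "g ms p \<le> 1" using P_g_le[OF p] .
  have den: "gamma$k * ((V *v p)$k + z$k) \<le> r0 * p$k" for k
  proof -
    have d: "0 < (V *v p)$k + z$k" using den_pos[OF pnn] .
    have gk: "0 < gamma$k" using gamma_pos by simp
    define D where "D = gamma$k * ((V *v p)$k + z$k)"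
    have D: "0 < D" using d gk by (simp add: D_def)
    have "1/r0 \<le> p$k / ((V *v p)$k + z$k) / gamma$k" using ge by (simp add: SIR_def)
    hence "1/r0 \<le> p$k / D" by (simp add: D_def divide_divide_eq_left mult.commute)
    hence "D / r0 \<le> p$k" using D by (simp add: le_divide_eq mult.commute)
    hence "D \<le> r0 * p$k" using r0_pos by (simp add: divide_le_eq mult.commute)
    thus ?thesis by (simp add: D_def)
  qed
  have Ble: "(B ms *v p)$k \<le> r0 * p$k" for k
  proof -
    have "(B ms *v p)$k \<le> gamma$k * ((V *v p)$k + z$k)"
      unfolding B_nth using gp z_pos gamma_pos
      by (intro mult_left_mono add_left_mono) (auto simp: less_imp_le mult_le_cancel_left1)
    thus ?thesis using den[of k] by simp
  qed
  define q where "q = r0 *s p - B ms *v p"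
  have qnn: "\<forall>i. 0 \<le> q$i" using Ble by (simp add: q_def)
  have "y \<bullet> q = 0"
    using left_pair[OF y(2)] by (simp add: q_def inner_diff_right scalar_mult_eq_scaleR)
  hence "q = 0" using pos_dot_zero[OF y(1) qnn] by simp
  hence Bp: "B ms *v p = r0 *s p" by (simp add: q_def)
  have g1: "g ms p = 1"
  proof -
    obtain k :: 'k where True by simp
    have "gamma$k * ((V *v p)$k + z$k * g ms p) = r0 * p$k"
      using arg_cong[OF Bp, of "\<lambda>v. v$k"] by (simp add: B_nth)
    hence "gamma$k * ((V *v p)$k + z$k) \<le> gamma$k * ((V *v p)$k + z$k * g ms p)" using den[of k] by simp
    hence "z$k \<le> z$k * g ms p" using gamma_pos[rule_format, of k] by simp
    hence "1 \<le> g ms p" using z_pos[rule_format, of k] by simp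
    thus ?thesis using gp by simp
  qed
  have Bx1: "B ms *v x1 = r0 *s x1" using x1 by (simp add: vec_eq_iff B_nth)
  obtain c where c: "p = c *s x1" using pos_eigvec_unique[OF B_nn B_irr x1(1) Bx1 pnn Bp] by blast
  have "c = 1" using g1 x1(2) by (simp add: c g_scale)
  thus ?thesis using c by simp
qed

lemma pbar_props:
  "(\<forall>i. 0 < pbar$i) \<and> (\<forall>m. g m pbar \<le> 1) \<and> (\<exists>ms. g ms pbar = 1) \<and>
   (\<forall>i. gamma$i * ((V *v pbar)$i + z$i) = r0 * pbar$i)"
proof -
  obtain x1 ms y where x1: "\<forall>i. 0 < x1$i" "\<forall>m. g m x1 \<le> 1" "g ms x1 = 1"
    "\<forall>i. gamma$i * ((V *v x1)$i + z$i) = r0 * x1$i"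
    and y: "\<forall>i. 0 < y$i" "transpose (B ms) *v y = r0 *s y"
    using key_vec by blast
  have x1P: "x1 \<in> power_set_P C phat"
    using x1(1,2) phat_pos by (auto simp: power_set_P_def Cv_nth less_imp_le)
  have sir1: "SIR V z x1 k / gamma$k = 1/r0" for k
  proof -
    have "gamma$k * ((V *v x1)$k + z$k) = r0 * x1$k" using x1(4) by simp
    thus ?thesis using x1(1) gamma_pos r0_pos unfolding SIR_def
      by (metis divide_divide_eq_left mult.commute nonzero_divide_mult_cancel_right
          less_irrefl divide_self_if)
  qed
  have m1: "(MIN k. SIR V z x1 k / gamma$k) = 1/r0" using sir1 by simp
  have "(MIN k. SIR V z x1 k / gamma$k) \<le> (MIN k. SIR V z pbar k / gamma$k)"
    using pbar_max x1P by blast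
  hence m2: "1/r0 \<le> (MIN k. SIR V z pbar k / gamma$k)" using m1 by simp
  have ge: "\<forall>k. 1/r0 \<le> SIR V z pbar k / gamma$k"
  proof
    fix k
    have "(MIN k. SIR V z pbar k / gamma$k) \<le> SIR V z pbar k / gamma$k" by (rule Min_le) auto
    thus "1/r0 \<le> SIR V z pbar k / gamma$k" using m2 by linarith
  qed
  have "pbar = x1" by (rule unique_opt[OF x1(1,3,4) y pbar_in ge])
  thus ?thesis using x1 by auto
qed

end

context model begin

lemma pbar_pos: "\<forall>i. 0 < pbar$i" using pbar_props by blast
lemma pbar_eq: "\<forall>i. gamma$i * ((V *v pbar)$i + z$i) = r0 * pbar$i" using pbar_props by blast
lemma pbar_gle: "g m pbar \<le> 1" using pbar_props by blast

lemma pbar_Pplus: "pbar \<in> power_set_Pplus C phat"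
  using pbar_in pbar_pos by (simp add: power_set_Pplus_def)

lemma N0_eq: "N0 C phat pbar = {n. g n pbar = 1}"
proof -
  obtain ms where ms: "g ms pbar = 1" using pbar_props by blast
  have "Max (range (\<lambda>m. g m pbar)) = 1"
    by (rule Max_eqI) (use ms pbar_gle in auto)
  thus ?thesis unfolding N0_def by auto
qed

lemma N0_ne: "N0 C phat pbar \<noteq> {}"
  using pbar_props N0_eq by auto

lemma Bn_pbar: assumes "n \<in> N0 C phat pbar" shows "B n *v pbar = r0 *s pbar"
  using assms pbar_eq by (simp add: N0_eq vec_eq_iff B_nth)

lemma rho_n: assumes "n \<in> N0 C phat pbar" shows "spectral_radius (B n) = r0"
  by (rule spectral_radius_pos_eigvec[OF B_nn pbar_pos Bn_pbar[OF assms]])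

lemma yv_ex: assumes "n \<in> N0 C phat pbar"
  shows "\<exists>y. (\<forall>i. 0 < y$i) \<and> transpose (B n) *v y = r0 *s y \<and> y \<bullet> pbar = 1"
proof -
  obtain y where y: "\<forall>i. 0 < y$i" "transpose (B n) *v y = r0 *s y"
    using left_from_right[OF B_nn B_irr pbar_pos Bn_pbar[OF assms]] by blast
  have yp: "0 < y \<bullet> pbar" using pos_dot_pos[OF y(1)] pbar_pos
    by (metis less_imp_le vec_eq_iff zero_index less_irrefl)
  define y' where "y' = (1 / (y \<bullet> pbar)) *s y"
  have "\<forall>i. 0 < y'$i" using y(1) yp by (simp add: y'_def)
  moreover have "transpose (B n) *v y' = r0 *s y'" unfolding y'_def vec.scale y(2) by simp
  moreover have "y' \<bullet> pbar = 1" using yp by (simp add: y'_def scalar_mult_eq_scaleR)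
  ultimately show ?thesis by blast
qed

definition yv where
  "yv n = (SOME y. (\<forall>i. 0 < y$i) \<and> transpose (B n) *v y = r0 *s y \<and> y \<bullet> pbar = 1)"
definition W where "W n = (\<chi> k. yv n $ k * pbar $ k)"

lemma yv: assumes "n \<in> N0 C phat pbar"
  shows "(\<forall>i. 0 < yv n$i) \<and> transpose (B n) *v yv n = r0 *s yv n \<and> yv n \<bullet> pbar = 1"
  unfolding yv_def using someI_ex[OF yv_ex[OF assms]] .

lemma W_simplex: assumes "n \<in> N0 C phat pbar" shows "W n \<in> simplex_plus"
  using yv[OF assms] pbar_pos by (simp add: simplex_plus_def W_def inner_real_vec)

lemma W_pw: assumes n: "n \<in> N0 C phat pbar" shows "perron_weight (B n) = W n"
  unfolding perron_weight_def rho_n[OF n]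
proof (rule the_equality)
  show "\<exists>x y. (\<forall>k. 0 < x$k) \<and> (\<forall>k. 0 < y$k) \<and> B n *v x = r0 *s x \<and>
      transpose (B n) *v y = r0 *s y \<and> y \<bullet> x = 1 \<and> W n = (\<chi> k. y$k * x$k)"
    using yv[OF n] pbar_pos Bn_pbar[OF n] by (auto simp: W_def)
next
  fix w assume "\<exists>x y. (\<forall>k. 0 < x$k) \<and> (\<forall>k. 0 < y$k) \<and> B n *v x = r0 *s x \<and>
      transpose (B n) *v y = r0 *s y \<and> y \<bullet> x = 1 \<and> w = (\<chi> k. y$k * x$k)"
  then obtain x y where x: "\<forall>k. 0 < x$k" "B n *v x = r0 *s x"
    and y: "\<forall>k. 0 < y$k" "transpose (B n) *v y = r0 *s y" and yx: "y \<bullet> x = 1"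
    and w: "w = (\<chi> k. y$k * x$k)" by blast
  obtain a where a: "x = a *s pbar"
    using pos_eigvec_unique[OF B_nn B_irr pbar_pos Bn_pbar[OF n], of x] x by (auto simp: less_imp_le)
  have nnT: "\<forall>i j. 0 \<le> transpose (B n)$i$j" using B_nn by (simp add: transpose_def)
  obtain b where b: "y = b *s yv n"
    using pos_eigvec_unique[OF nnT irred_transpose[OF B_irr], of "yv n" r0 y] yv[OF n] y
    by (auto simp: less_imp_le)
  have "a * b = 1" using yx yv[OF n] by (simp add: a b scalar_mult_eq_scaleR algebra_simps inner_commute)
  thus "w = W n" by (simp add: w a b W_def vec_eq_iff algebra_simps)
qed

lemma G_pbar: assumes "w \<in> simplex_plus" shows "Gfun \<phi> gamma V z w pbar = psi \<phi> r0"
proof -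
  have "gamma$k / SIR V z pbar k = r0" for k
  proof -
    have "gamma$k * ((V *v pbar)$k + z$k) = r0 * pbar$k" using pbar_eq by simp
    thus ?thesis using pbar_pos[rule_format, of k] by (simp add: SIR_def)
  qed
  hence "Gfun \<phi> gamma V z w pbar = (\<Sum>k\<in>UNIV. w$k) * psi \<phi> r0"
    by (simp add: Gfun_def sum_distrib_right)
  thus ?thesis using assms by (simp add: simplex_plus_def)
qed

lemma G_W: assumes n: "n \<in> N0 C phat pbar" and p: "p \<in> power_set_Pplus C phat"
  shows "psi \<phi> r0 \<le> Gfun \<phi> gamma V z (W n) p"
proof -
  have ppos: "\<forall>i. 0 < p$i" and pP: "p \<in> power_set_P C phat" using p by (auto simp: power_set_Pplus_def)
  have pnn: "\<forall>j. 0 \<le> p$j" using ppos by (simp add: less_imp_le)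
  define a where "a k = gamma$k / SIR V z p k" for k
  have a_eq: "a k = gamma$k * ((V *v p)$k + z$k) / p$k" for k
    using den_pos[OF pnn, of k] by (simp add: a_def SIR_def)
  have apos: "\<forall>k. 0 < a k"
    using den_pos[OF pnn] gamma_pos ppos by (simp add: a_eq)
  have Bpos: "0 < (B n *v p)$k" for k using B_pos[OF ppos] .
  have Ble: "(B n *v p)$k / p$k \<le> a k" for k
  proof -
    have "(B n *v p)$k \<le> gamma$k * ((V *v p)$k + z$k)"
      unfolding B_nth using P_g_le[OF pP, of n] z_pos gamma_pos
      by (intro mult_left_mono add_left_mono) (auto simp: less_imp_le mult_le_cancel_left1)
    thus ?thesis using ppos[rule_format, of k] by (simp add: a_eq divide_right_mono)
  qed
  have yvn: "\<forall>i. 0 < yv n$i" "transpose (B n) *v yv n = r0 *s yv n" "yv n \<bullet> pbar = 1"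
    using yv[OF n] by auto
  have fk: "(\<Sum>k\<in>UNIV. (yv n$k * pbar$k) * ln ((B n *v p)$k / p$k)) \<ge> (\<Sum>k\<in>UNIV. yv n$k * pbar$k) * ln r0"
    by (rule FK[OF B_nn pbar_pos yvn(1) Bn_pbar[OF n] yvn(2) r0_pos ppos])
  have s1: "(\<Sum>k\<in>UNIV. yv n$k * pbar$k) = 1" using yvn(3) by (simp add: inner_real_vec)
  have "ln r0 \<le> (\<Sum>k\<in>UNIV. W n$k * ln ((B n *v p)$k / p$k))" using fk s1 by (simp add: W_def)
  also have "\<dots> \<le> (\<Sum>k\<in>UNIV. W n$k * ln (a k))"
  proof (intro sum_mono mult_left_mono)
    fix k
    show "0 \<le> W n$k" using yvn(1) pbar_pos by (simp add: W_def less_imp_le)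
    show "ln ((B n *v p)$k / p$k) \<le> ln (a k)"
      using Ble[of k] Bpos[of k] ppos apos by simp
  qed
  finally have "ln r0 \<le> (\<Sum>k\<in>UNIV. W n$k * ln (a k))" .
  moreover have "\<forall>k. 0 \<le> W n$k" "(\<Sum>k\<in>UNIV. W n$k) = 1"
    using W_simplex[OF n] by (auto simp: simplex_plus_def less_imp_le)
  ultimately have "psi \<phi> r0 \<le> (\<Sum>k\<in>UNIV. W n$k * psi \<phi> (a k))"
    using jensen_psi[OF A2_mono A3, of "\<lambda>k. W n$k" a r0] apos r0_pos by blast
  thus ?thesis by (simp add: Gfun_def a_def)
qed

end

lemma farkas_cone:
  fixes v :: "real^'k" and S :: "(real^'k) set"
  assumes fin: "finite S" and H: "\<forall>d. (\<forall>s\<in>S. s \<bullet> d \<le> 0) \<longrightarrow> v \<bullet> d \<le> 0"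
  shows "v \<in> convex_cone hull S"
proof (rule ccontr)
  let ?K = "convex_cone hull S"
  assume nv: "v \<notin> ?K"
  obtain a b where ab: "a \<bullet> v < b" "\<forall>x\<in>?K. b < a \<bullet> x"
    using separating_hyperplane_closed_point[OF convex_convex_cone_hull closed_convex_cone_hull[OF fin] nv]
    by blast
  have b0: "b < 0" using ab(2) convex_cone_hull_contains_0 by force
  have as: "0 \<le> a \<bullet> s" if s: "s \<in> S" for s
  proof (rule ccontr)
    assume "\<not> 0 \<le> a \<bullet> s"
    hence neg: "a \<bullet> s < 0" by simp
    define c where "c = 2 * b / (a \<bullet> s)"
    have c0: "0 \<le> c" using neg b0 by (simp add: c_def divide_nonpos_neg)
    have "c *\<^sub>R s \<in> ?K"
      by (rule conicD[OF conic_convex_cone_hull]) (use s c0 hull_inc in auto)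
    hence "b < a \<bullet> (c *\<^sub>R s)" using ab(2) by blast
    also have "a \<bullet> (c *\<^sub>R s) = 2 * b" using neg by (simp add: c_def)
    finally show False using b0 by simp
  qed
  have "\<forall>s\<in>S. s \<bullet> (- a) \<le> 0" using as by (simp add: inner_commute)
  hence "v \<bullet> (- a) \<le> 0" using H by blast
  hence "0 \<le> a \<bullet> v" by (simp add: inner_commute)
  thus False using ab(1) b0 by simp
qed

lemma cone_rep:
  fixes S :: "(real^'k) set"
  assumes fin: "finite S" and x: "x \<in> convex_cone hull S"
  shows "\<exists>\<mu>. (\<forall>s\<in>S. 0 \<le> \<mu> s) \<and> x = (\<Sum>s\<in>S. \<mu> s *\<^sub>R s)"
proof -
  define K where "K = {x. \<exists>\<mu>. (\<forall>s\<in>S. 0 \<le> \<mu> s) \<and> x = (\<Sum>s\<in>S. \<mu> s *\<^sub>R s)}"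
  have SK: "S \<subseteq> K"
  proof
    fix s0 assume s0: "s0 \<in> S"
    have "(\<Sum>s\<in>S. (if s = s0 then 1 else 0) *\<^sub>R s) = (\<Sum>s\<in>S. if s = s0 then s else 0)"
      by (rule sum.cong) auto
    also have "\<dots> = s0" using fin s0 by (simp add: sum.delta')
    finally have "s0 = (\<Sum>s\<in>S. (if s = s0 then 1 else 0) *\<^sub>R s)" by simp
    thus "s0 \<in> K" unfolding K_def by (intro CollectI exI[of _ "\<lambda>s. if s = s0 then 1 else 0"]) auto
  qed
  have cc: "convex_cone K"
    unfolding convex_cone_def
  proof (intro conjI)
    show "K \<noteq> {}" using SK unfolding K_def
      by (auto intro!: exI[of _ "\<lambda>s. 0"])
    show "convex K" unfolding convex_def
    proof (intro ballI allI impI)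
      fix x y :: "real^'k" and u v :: real
      assume "x \<in> K" "y \<in> K" and uv: "0 \<le> u" "0 \<le> v" "u + v = 1"
      then obtain \<mu>x \<mu>y where mx: "\<forall>s\<in>S. 0 \<le> \<mu>x s" "x = (\<Sum>s\<in>S. \<mu>x s *\<^sub>R s)"
        and my: "\<forall>s\<in>S. 0 \<le> \<mu>y s" "y = (\<Sum>s\<in>S. \<mu>y s *\<^sub>R s)" unfolding K_def by blast
      have "u *\<^sub>R x + v *\<^sub>R y = (\<Sum>s\<in>S. (u * \<mu>x s + v * \<mu>y s) *\<^sub>R s)"
        by (simp add: mx(2) my(2) scaleR_sum_right sum.distrib scaleR_add_left)
      moreover have "\<forall>s\<in>S. 0 \<le> u * \<mu>x s + v * \<mu>y s" using mx(1) my(1) uv by simp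
      ultimately show "u *\<^sub>R x + v *\<^sub>R y \<in> K" unfolding K_def
        by (intro CollectI exI[of _ "\<lambda>s. u * \<mu>x s + v * \<mu>y s"]) simp
    qed
    show "conic K" unfolding conic_def
    proof (intro allI impI)
      fix x :: "real^'k" and c :: real assume "x \<in> K" "0 \<le> c"
      then obtain \<mu> where m: "\<forall>s\<in>S. 0 \<le> \<mu> s" "x = (\<Sum>s\<in>S. \<mu> s *\<^sub>R s)" unfolding K_def by blast
      have "c *\<^sub>R x = (\<Sum>s\<in>S. (c * \<mu> s) *\<^sub>R s)" by (simp add: m(2) scaleR_sum_right)
      moreover have "\<forall>s\<in>S. 0 \<le> c * \<mu> s" using m(1) \<open>0 \<le> c\<close> by simp
      ultimately show "c *\<^sub>R x \<in> K" unfolding K_def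
        by (intro CollectI exI[of _ "\<lambda>s. c * \<mu> s"]) simp
    qed
  qed
  have "convex_cone hull S \<subseteq> K" by (rule hull_minimal[of S K convex_cone, OF SK cc])
  hence "x \<in> K" using x by blast
  thus ?thesis unfolding K_def by simp
qed

lemma simplex_max:
  fixes b :: "'k::finite \<Rightarrow> real"
  assumes H: "\<forall>w\<in>simplex_plus. (\<Sum>k\<in>UNIV. w$k * b k) \<le> m"
  shows "b k0 \<le> m"
proof (rule ccontr)
  assume "\<not> b k0 \<le> m"
  hence dpos: "0 < b k0 - m" by simp
  define avg where "avg = (\<Sum>k\<in>UNIV. b k) / real CARD('k)"
  define E where "E = \<bar>avg - b k0\<bar> + 1"
  have E: "0 < E" by (simp add: E_def add_nonneg_pos)
  define \<epsilon> where "\<epsilon> = min (1/2) ((b k0 - m) / (2 * E))"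
  have e0: "0 < \<epsilon>" using dpos E by (simp add: \<epsilon>_def)
  have e1: "\<epsilon> \<le> 1/2" by (simp add: \<epsilon>_def)
  have eE: "\<epsilon> * E \<le> (b k0 - m) / 2"
  proof -
    have "\<epsilon> \<le> (b k0 - m) / (2 * E)" by (simp add: \<epsilon>_def)
    thus ?thesis using E by (simp add: field_simps)
  qed
  define w :: "real^'k" where "w = (\<chi> k. (1 - \<epsilon>) * (if k = k0 then 1 else 0) + \<epsilon> / real CARD('k))"
  have wpos: "\<forall>k. 0 < w$k" using e0 e1 by (simp add: w_def add_nonneg_pos)
  have wsum: "(\<Sum>k\<in>UNIV. w$k) = 1"
  proof -
    have "(\<Sum>k\<in>UNIV. (1 - \<epsilon>) * (if k = k0 then 1 else 0)) = 1 - \<epsilon>"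
      by (simp add: sum_distrib_left[symmetric])
    thus ?thesis by (simp add: w_def sum.distrib)
  qed
  have ws: "w \<in> simplex_plus" using wpos wsum by (simp add: simplex_plus_def)
  have "(\<Sum>k\<in>UNIV. w$k * b k) = (\<Sum>k\<in>UNIV. (1 - \<epsilon>) * (if k = k0 then b k else 0) + \<epsilon> / real CARD('k) * b k)"
    by (rule sum.cong) (auto simp: w_def distrib_right)
  also have "\<dots> = (1 - \<epsilon>) * (\<Sum>k\<in>UNIV. (if k = k0 then b k else 0)) + \<epsilon> / real CARD('k) * (\<Sum>k\<in>UNIV. b k)"
    by (simp only: sum.distrib sum_distrib_left)
  also have "\<dots> = (1 - \<epsilon>) * b k0 + \<epsilon> * avg" by (simp add: avg_def)
  also have "\<dots> = b k0 + \<epsilon> * (avg - b k0)" by (simp add: algebra_simps)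
  also have "\<dots> \<ge> b k0 - \<epsilon> * E"
  proof -
    have "- (avg - b k0) \<le> E" by (simp add: E_def)
    hence "\<epsilon> * (- (avg - b k0)) \<le> \<epsilon> * E" using e0 by (intro mult_left_mono) auto
    thus ?thesis by (simp add: algebra_simps)
  qed
  finally have "b k0 - \<epsilon> * E \<le> (\<Sum>k\<in>UNIV. w$k * b k)" .
  moreover have "(\<Sum>k\<in>UNIV. w$k * b k) \<le> m" using H ws by blast
  ultimately have "b k0 - m \<le> \<epsilon> * E" by linarith
  hence "b k0 - m \<le> (b k0 - m) / 2" using eE by linarith
  hence H2: "2 * (b k0 - m) \<le> b k0 - m" by (simp add: field_simps)
  have aux: "\<And>x::real. 2 * x \<le> x \<Longrightarrow> 0 < x \<Longrightarrow> False" by linarith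
  show False by (rule aux[OF H2 dpos])
qed

context model begin

lemma phi_mono_le: "0 < x \<Longrightarrow> x \<le> y \<Longrightarrow> \<phi> x \<le> \<phi> y"
  by (rule strict_mono_on_leD[OF A2_mono]) auto

lemma phi_mono_less: "0 < x \<Longrightarrow> x < y \<Longrightarrow> \<phi> x < \<phi> y"
  by (rule strict_mono_onD[OF A2_mono]) auto

lemma phi_deriv_pos:
  assumes x0: "0 < x0" and D: "(\<phi> has_real_derivative D) (at x0)"
  shows "0 < D"
proof -
  let ?h = "\<lambda>q. ln (the_inv_into {0<..} \<phi> q)"
  have inj: "inj_on \<phi> {0<..}" using A2_mono strict_mono_on_imp_inj_on by blast
  have hphi: "?h (\<phi> x) = ln x" if "0 < x" for x
    using the_inv_into_f_f[OF inj] that by simp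
  define x1 where "x1 = 2 * x0"
  define L where "L = ln x1 - ln x0"
  have L: "0 < L" using x0 by (simp add: L_def x1_def ln_mult)
  have q01: "\<phi> x0 < \<phi> x1" using x0 by (intro phi_mono_less) (auto simp: x1_def)
  define \<kappa> where "\<kappa> = (\<phi> x1 - \<phi> x0) / (x0 * L)"
  have kpos: "0 < \<kappa>" using q01 x0 L by (simp add: \<kappa>_def)
  have quot: "\<kappa> \<le> (\<phi> x - \<phi> x0) / (x - x0)" if x: "0 < x" "x < x0" for x
  proof -
    define q where "q = \<phi> x"
    define q0 where "q0 = \<phi> x0"
    define q1 where "q1 = \<phi> x1"
    have qq0: "q < q0" unfolding q_def q0_def using x by (intro phi_mono_less) auto
    have qq1: "q0 < q1" using q01 by (simp add: q0_def q1_def)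
    define t where "t = (q0 - q) / (q1 - q)"
    have t0: "0 \<le> t" "0 \<le> 1 - t" using qq0 qq1 by (auto simp: t_def field_simps)
    have tq: "t * (q1 - q) = q0 - q" using qq0 qq1 by (simp add: t_def)
    have "(1 - t) *\<^sub>R q + t *\<^sub>R q1 = q + t * (q1 - q)" by (simp add: algebra_simps)
    also have "\<dots> = q0" using tq by simp
    finally have comb: "(1 - t) *\<^sub>R q + t *\<^sub>R q1 = q0" .
    have "?h ((1 - t) *\<^sub>R q + t *\<^sub>R q1) \<le> (1 - t) * ?h q + t * ?h q1"
      using A3 t0 x x0 unfolding convex_on_def q_def q1_def x1_def by auto
    hence "ln x0 \<le> (1 - t) * ln x + t * ln x1"
      using comb hphi x x0 by (simp add: q_def q0_def q1_def x1_def)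
    hence e1: "(1 - t) * (ln x0 - ln x) \<le> t * L" by (simp add: L_def algebra_simps)
    have "1 - x / x0 \<le> ln x0 - ln x"
      using ln_le_minus_one[of "x / x0"] x x0 by (simp add: ln_div)
    hence "(1 - t) * (1 - x / x0) \<le> (1 - t) * (ln x0 - ln x)" using t0 by (intro mult_left_mono)
    hence "(1 - t) * (1 - x / x0) \<le> t * L" using e1 by linarith
    moreover have "1 - t = (q1 - q0) / (q1 - q)" using qq0 qq1 by (simp add: t_def field_simps)
    ultimately have "((q1 - q0) * (1 - x / x0)) / (q1 - q) \<le> ((q0 - q) * L) / (q1 - q)"
      by (simp add: t_def)
    hence "(q1 - q0) * (1 - x / x0) \<le> (q0 - q) * L"
      using qq0 qq1 by (simp add: divide_le_cancel)
    moreover have "(q1 - q0) * (1 - x / x0) = (q1 - q0) * (x0 - x) / x0" using x0 by (simp add: field_simps)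
    ultimately have "(q1 - q0) * (x0 - x) / x0 \<le> (q0 - q) * L" by simp
    hence "(q1 - q0) / (x0 * L) \<le> (q0 - q) / (x0 - x)"
      using x x0 L by (simp add: field_simps)
    moreover have "(\<phi> x - \<phi> x0) / (x - x0) = (\<phi> x0 - \<phi> x) / (x0 - x)"
      by (metis minus_diff_eq minus_divide_divide)
    ultimately show ?thesis by (simp add: \<kappa>_def q_def q0_def q1_def)
  qed
  have "(\<phi> has_real_derivative D) (at x0 within {..<x0})" using D by (rule has_field_derivative_at_within)
  hence lim: "((\<lambda>y. (\<phi> y - \<phi> x0) / (y - x0)) \<longlongrightarrow> D) (at_left x0)"
    by (simp add: has_field_derivative_iff)
  have ev: "eventually (\<lambda>y. \<kappa> \<le> (\<phi> y - \<phi> x0) / (y - x0)) (at_left x0)"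
    using eventually_at_left_real[OF x0] by eventually_elim (use quot in auto)
  have "\<kappa> \<le> D" by (rule tendsto_lowerbound[OF lim ev]) simp
  thus ?thesis using kpos by simp
qed


lemma g_add: "g n (p + q) = g n p + g n q"
  by (simp add: g_sum sum.distrib distrib_left add_divide_distrib)

lemma quot_deriv:
  fixes a b c e g :: real assumes c: "0 < c" and g: "0 < g"
  shows "((\<lambda>h. (a + h * b) / (c + h * e) / g) has_real_derivative ((b * c - a * e) / (c * c) / g)) (at 0)"
  using c g by (auto intro!: derivative_eq_intros) (simp add: field_simps)

lemma hk_deriv:
  fixes k :: 'k and d :: "real^'k"
  defines "den \<equiv> (V *v pbar)$k + z$k"
  shows "((\<lambda>h. (pbar$k + h * d$k) / ((V *v pbar)$k + h * (V *v d)$k + z$k) / gamma$k)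
          has_real_derivative ((d$k * den - pbar$k * (V *v d)$k) / (den * den) / gamma$k)) (at 0)"
proof -
  have den: "0 < den" using den_pos[of pbar k] pbar_pos by (simp add: den_def less_imp_le)
  have gk: "0 < gamma$k" using gamma_pos by simp
  have e: "(\<lambda>h. (pbar$k + h * d$k) / ((V *v pbar)$k + h * (V *v d)$k + z$k) / gamma$k)
      = (\<lambda>h. (pbar$k + h * d$k) / (den + h * (V *v d)$k) / gamma$k)"
    by (simp add: den_def algebra_simps)
  show ?thesis unfolding e by (rule quot_deriv[OF den gk])
qed

lemma first_order:
  assumes w: "w \<in> simplex_plus"
    and minp: "\<forall>p\<in>power_set_Pplus C phat. Gfun \<phi> gamma V z w pbar \<le> Gfun \<phi> gamma V z w p"
    and d: "\<forall>n\<in>N0 C phat pbar. g n d \<le> 0"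
  shows "(\<Sum>k\<in>UNIV. (w$k / pbar$k) * (r0 * d$k - gamma$k * (V *v d)$k)) \<le> 0"
proof (rule ccontr)
  define S where "S = (\<Sum>k\<in>UNIV. (w$k / pbar$k) * (r0 * d$k - gamma$k * (V *v d)$k))"
  assume "\<not> ?thesis"
  hence Spos: "0 < S" by (simp add: S_def)
  obtain \<phi>' where phid: "\<forall>x>0. (\<phi> has_real_derivative \<phi>' x) (at x)" using A2_deriv by blast
  have x0: "0 < 1/r0" using r0_pos by simp
  have D0: "0 < \<phi>' (1/r0)" using phi_deriv_pos[OF x0] phid x0 by blast
  define den where "den k = (V *v pbar)$k + z$k" for k
  define hk where "hk k h = (pbar$k + h * d$k) / ((V *v pbar)$k + h * (V *v d)$k + z$k) / gamma$k" for k h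
  define hk' where "hk' k = (d$k * den k - pbar$k * (V *v d)$k) / (den k * den k) / gamma$k" for k
  define f where "f h = Gfun \<phi> gamma V z w (pbar + h *s d)" for h
  have f_eq: "f = (\<lambda>h. \<Sum>k\<in>UNIV. - (w$k * \<phi> (hk k h)))"
  proof
    fix h
    show "f h = (\<Sum>k\<in>UNIV. - (w$k * \<phi> (hk k h)))"
      unfolding f_def Gfun_def psi_def hk_def SIR_def
      by (intro sum.cong refl) (simp add: matrix_vector_right_distrib vec.scale algebra_simps)
  qed
  have pe: "gamma$k * den k = r0 * pbar$k" for k using pbar_eq by (simp add: den_def)
  have hk0: "hk k 0 = 1/r0" for k
  proof -
    have "hk k 0 = pbar$k / (gamma$k * den k)" by (simp add: hk_def den_def mult.commute)
    thus ?thesis using pe[of k] pbar_pos[rule_format, of k] r0_pos by simp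
  qed
  have dterm: "((\<lambda>h. - (w$k * \<phi> (hk k h))) has_real_derivative - (w$k * (\<phi>' (1/r0) * hk' k))) (at 0)" for k
  proof -
    have dh: "(hk k has_real_derivative hk' k) (at 0)"
    proof -
      have "hk k = (\<lambda>h. (pbar$k + h * d$k) / ((V *v pbar)$k + h * (V *v d)$k + z$k) / gamma$k)"
        by (simp add: hk_def fun_eq_iff)
      thus ?thesis using hk_deriv[of k d] by (simp add: hk'_def den_def)
    qed
    have dp: "(\<phi> has_real_derivative \<phi>' (1/r0)) (at (hk k 0))" using phid x0 hk0 by simp
    have "((\<lambda>h. \<phi> (hk k h)) has_real_derivative \<phi>' (1/r0) * hk' k) (at 0)"
      by (rule DERIV_chain2[OF dp dh])
    hence "((\<lambda>h. w$k * \<phi> (hk k h)) has_real_derivative w$k * (\<phi>' (1/r0) * hk' k)) (at 0)"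
      by (rule DERIV_cmult)
    thus ?thesis by (rule DERIV_minus)
  qed
  have df: "(f has_real_derivative (\<Sum>k\<in>UNIV. - (w$k * (\<phi>' (1/r0) * hk' k)))) (at 0)"
    unfolding f_eq by (rule DERIV_sum) (rule dterm)
  have hk'_eq: "hk' k = (r0 * d$k - gamma$k * (V *v d)$k) / (r0 * r0 * pbar$k)" for k
  proof -
    have dk: "den k = r0 * pbar$k / gamma$k" using pe[of k] gamma_pos
      by (metis less_irrefl nonzero_mult_div_cancel_left)
    have "0 < pbar$k" "0 < gamma$k" using pbar_pos gamma_pos by auto
    thus ?thesis using r0_pos unfolding hk'_def dk by (simp add: field_simps)
  qed
  have val: "(\<Sum>k\<in>UNIV. - (w$k * (\<phi>' (1/r0) * hk' k))) = - (\<phi>' (1/r0) / (r0 * r0)) * S"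
    unfolding S_def sum_distrib_left sum_negf[symmetric]
    by (intro sum.cong refl) (simp add: hk'_eq)
  have neg: "- (\<phi>' (1/r0) / (r0 * r0)) * S < 0" using D0 Spos r0_pos by simp
  obtain \<delta> where \<delta>: "0 < \<delta>" "\<forall>h>0. h < \<delta> \<longrightarrow> f 0 > f (0 + h)"
    using DERIV_neg_dec_right[OF df] neg val by auto
  have ev1: "eventually (\<lambda>h. \<forall>k. 0 < pbar$k + h * d$k) (at_right 0)"
  proof (rule eventually_all_finite)
    fix k
    have "((\<lambda>h. pbar$k + h * d$k) \<longlongrightarrow> pbar$k + 0 * d$k) (at_right 0)" by (intro tendsto_intros)
    thus "eventually (\<lambda>h. 0 < pbar$k + h * d$k) (at_right 0)"
      using pbar_pos by (intro order_tendstoD(1)) auto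
  qed
  have ev2: "eventually (\<lambda>h. \<forall>m. 0 < h \<longrightarrow> g m pbar + h * g m d \<le> 1) (at_right 0)"
  proof (rule eventually_all_finite)
    fix m
    show "eventually (\<lambda>h. 0 < h \<longrightarrow> g m pbar + h * g m d \<le> 1) (at_right 0)"
    proof (cases "g m pbar = 1")
      case True
      hence "g m d \<le> 0" using d N0_eq by auto
      hence "\<forall>h. 0 < h \<longrightarrow> g m pbar + h * g m d \<le> 1" using True by (simp add: mult_nonneg_nonpos)
      thus ?thesis by (simp add: always_eventually)
    next
      case False
      hence lt: "g m pbar < 1" using pbar_gle[of m] by simp
      have "((\<lambda>h. g m pbar + h * g m d) \<longlongrightarrow> g m pbar + 0 * g m d) (at_right 0)" by (intro tendsto_intros)
      hence "eventually (\<lambda>h. g m pbar + h * g m d < 1) (at_right 0)"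
        using lt by (intro order_tendstoD(2)) auto
      thus ?thesis by eventually_elim simp
    qed
  qed
  have ev3: "eventually (\<lambda>h. h \<in> {0<..<\<delta>}) (at_right 0)" using eventually_at_right_real[OF \<delta>(1)] .
  have "eventually (\<lambda>h. (\<forall>k. 0 < pbar$k + h * d$k) \<and> (\<forall>m. 0 < h \<longrightarrow> g m pbar + h * g m d \<le> 1)
      \<and> h \<in> {0<..<\<delta>}) (at_right 0)"
    using ev1 ev2 ev3 by eventually_elim blast
  hence "at_right (0::real) = bot \<or> (\<exists>h. (\<forall>k. 0 < pbar$k + h * d$k) \<and> (\<forall>m. 0 < h \<longrightarrow> g m pbar + h * g m d \<le> 1)
      \<and> h \<in> {0<..<\<delta>})" by (rule eventually_happens)
  then obtain h where h: "\<forall>k. 0 < pbar$k + h * d$k" "\<forall>m. 0 < h \<longrightarrow> g m pbar + h * g m d \<le> 1"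
    "0 < h" "h < \<delta>"
    using trivial_limit_at_right_real[of 0] by auto
  define p where "p = pbar + h *s d"
  have pk: "p$k = pbar$k + h * d$k" for k by (simp add: p_def)
  have gp: "g m p = g m pbar + h * g m d" for m by (simp add: p_def g_add g_scale)
  have pP: "p \<in> power_set_Pplus C phat"
  proof -
    have "\<forall>k. 0 < p$k" using h(1) pk by simp
    moreover have "(C *v p)$n \<le> phat$n" for n
    proof -
      have "g n p \<le> 1" using h(2,3) gp by simp
      thus ?thesis using phat_pos[rule_format, of n] by (simp add: Cv_nth)
    qed
    ultimately show ?thesis by (auto simp: power_set_Pplus_def power_set_P_def less_imp_le)
  qed
  have "f 0 \<le> f h" using minp pP by (simp add: f_def p_def)
  moreover have "f h < f 0" using \<delta>(2) h(3,4) by simp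
  ultimately show False by simp
qed

end

context model begin

definition Lop :: "real^'k \<Rightarrow> real^'k" where
  "Lop q = (\<chi> j. r0 * q$j - (\<Sum>i\<in>UNIV. gamma$i * V$i$j * q$i))"

lemma Lop_nth: "Lop q $ j = r0 * q$j - (\<Sum>i\<in>UNIV. gamma$i * V$i$j * q$i)"
  by (simp add: Lop_def)

lemma Lop_diff: "Lop (a - b) = Lop a - Lop b"
  by (simp add: vec_eq_iff Lop_nth algebra_simps sum_subtractf)

lemma Lop_sum: "finite A \<Longrightarrow> Lop (\<Sum>s\<in>A. c s *\<^sub>R x s) = (\<Sum>s\<in>A. c s *\<^sub>R Lop (x s))"
  by (simp add: vec_eq_iff Lop_nth sum_distrib_left sum_subtractf algebra_simps)
     (subst sum.swap, simp add: sum_distrib_left mult_ac)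

lemma Lop_inj: assumes "Lop q = 0" shows "q = 0"
proof -
  have eq: "r0 * q$j = (\<Sum>i\<in>UNIV. gamma$i * V$i$j * q$i)" for j
    using arg_cong[OF assms, of "\<lambda>v. v$j"] by (simp add: Lop_nth)
  have ineq: "r0 * \<bar>q$j\<bar> \<le> (\<Sum>i\<in>UNIV. gamma$i * V$i$j * \<bar>q$i\<bar>)" for j
  proof -
    have "r0 * \<bar>q$j\<bar> = \<bar>r0 * q$j\<bar>" using r0_pos by (simp add: abs_mult)
    also have "\<dots> \<le> (\<Sum>i\<in>UNIV. \<bar>gamma$i * V$i$j * q$i\<bar>)" unfolding eq by (rule sum_abs)
    also have "\<dots> = (\<Sum>i\<in>UNIV. gamma$i * V$i$j * \<bar>q$i\<bar>)"
      using gamma_pos V_nonneg by (intro sum.cong refl) (simp add: abs_mult less_imp_le)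
    finally show ?thesis .
  qed
  have "(\<Sum>j\<in>UNIV. pbar$j * (r0 * \<bar>q$j\<bar>)) \<le> (\<Sum>j\<in>UNIV. pbar$j * (\<Sum>i\<in>UNIV. gamma$i * V$i$j * \<bar>q$i\<bar>))"
    using pbar_pos ineq by (intro sum_mono mult_left_mono) (auto simp: less_imp_le)
  also have "\<dots> = (\<Sum>i\<in>UNIV. gamma$i * \<bar>q$i\<bar> * (V *v pbar)$i)"
    by (simp add: sum_distrib_left mv_nth) (subst sum.swap, simp add: mult_ac sum_distrib_left)
  also have "\<dots> = (\<Sum>i\<in>UNIV. \<bar>q$i\<bar> * (r0 * pbar$i) - \<bar>q$i\<bar> * (gamma$i * z$i))"
  proof (intro sum.cong refl)
    fix i
    have e: "gamma$i * (V *v pbar)$i + gamma$i * z$i = r0 * pbar$i" using pbar_eq[rule_format, of i]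
      by (simp add: distrib_left)
    hence hh: "gamma$i * (V *v pbar)$i = r0 * pbar$i - gamma$i * z$i" by linarith
    have "gamma$i * \<bar>q$i\<bar> * (V *v pbar)$i = \<bar>q$i\<bar> * (gamma$i * (V *v pbar)$i)" by (simp add: mult_ac)
    also have "\<dots> = \<bar>q$i\<bar> * (r0 * pbar$i - gamma$i * z$i)" by (simp only: hh)
    finally show "gamma$i * \<bar>q$i\<bar> * (V *v pbar)$i = \<bar>q$i\<bar> * (r0 * pbar$i) - \<bar>q$i\<bar> * (gamma$i * z$i)"
      by (simp add: right_diff_distrib)
  qed
  also have "\<dots> = (\<Sum>i\<in>UNIV. \<bar>q$i\<bar> * (r0 * pbar$i)) - (\<Sum>i\<in>UNIV. \<bar>q$i\<bar> * (gamma$i * z$i))"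
    by (rule sum_subtractf)
  also have "(\<Sum>i\<in>UNIV. \<bar>q$i\<bar> * (r0 * pbar$i)) = (\<Sum>j\<in>UNIV. pbar$j * (r0 * \<bar>q$j\<bar>))"
    by (intro sum.cong refl) (simp add: mult_ac)
  finally have le0: "(\<Sum>i\<in>UNIV. \<bar>q$i\<bar> * (gamma$i * z$i)) \<le> 0" by linarith
  have nn: "0 \<le> \<bar>q$i\<bar> * (gamma$i * z$i)" for i
    using gamma_pos[rule_format, of i] z_pos[rule_format, of i] by simp
  have "0 \<le> (\<Sum>i\<in>UNIV. \<bar>q$i\<bar> * (gamma$i * z$i))" by (rule sum_nonneg) (rule nn)
  hence "(\<Sum>i\<in>UNIV. \<bar>q$i\<bar> * (gamma$i * z$i)) = 0" using le0 by linarith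
  hence all0: "\<forall>i\<in>UNIV. \<bar>q$i\<bar> * (gamma$i * z$i) = 0"
    by (subst sum_nonneg_eq_0_iff[symmetric]) (auto intro: nn)
  have "q$i = 0" for i
  proof -
    have "\<bar>q$i\<bar> * (gamma$i * z$i) = 0" using all0 by blast
    moreover have "gamma$i * z$i \<noteq> 0" using gamma_pos[rule_format, of i] z_pos[rule_format, of i] by simp
    ultimately show ?thesis by simp
  qed
  thus ?thesis by (simp add: vec_eq_iff)
qed

definition sig where "sig n = (\<Sum>i\<in>UNIV. gamma$i * z$i * yv n$i) / phat$n"

lemma sig_pos: assumes "n \<in> N0 C phat pbar" shows "0 < sig n"
proof -
  obtain i :: 'k where True by simp
  have "0 < gamma$i * z$i * yv n$i" using gamma_pos z_pos yv[OF assms] by simp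
  also have "\<dots> \<le> (\<Sum>i\<in>UNIV. gamma$i * z$i * yv n$i)"
    by (rule member_le_sum) (use gamma_pos z_pos yv[OF assms] in \<open>auto simp: less_imp_le\<close>)
  finally show ?thesis using phat_pos by (simp add: sig_def)
qed

lemma Lop_yv: assumes n: "n \<in> N0 C phat pbar" shows "Lop (yv n) = sig n *s (C$n)"
proof -
  have "Lop (yv n) $ j = sig n * C$n$j" for j
  proof -
    have "(transpose (B n) *v yv n)$j = r0 * yv n$j" using yv[OF n] by simp
    hence "(\<Sum>i\<in>UNIV. B n$i$j * yv n$i) = r0 * yv n$j" unfolding tmv_nth .
    moreover have "(\<Sum>i\<in>UNIV. B n$i$j * yv n$i) = (\<Sum>i\<in>UNIV. gamma$i * V$i$j * yv n$i) + sig n * C$n$j"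
    proof -
      have "(\<Sum>i\<in>UNIV. B n$i$j * yv n$i) = (\<Sum>i\<in>UNIV. gamma$i * V$i$j * yv n$i + (gamma$i * z$i * yv n$i / phat$n) * C$n$j)"
        by (intro sum.cong refl) (simp add: Bmat_def algebra_simps)
      also have "\<dots> = (\<Sum>i\<in>UNIV. gamma$i * V$i$j * yv n$i) + (\<Sum>i\<in>UNIV. gamma$i * z$i * yv n$i / phat$n) * C$n$j"
        by (simp add: sum.distrib sum_distrib_right)
      also have "(\<Sum>i\<in>UNIV. gamma$i * z$i * yv n$i / phat$n) = sig n"
        by (simp add: sig_def sum_divide_distrib)
      finally show ?thesis .
    qed
    ultimately show ?thesis by (simp add: Lop_nth)
  qed
  thus ?thesis by (simp add: vec_eq_iff)
qed

end

context model begin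

lemma psi_mono_less: assumes "0 < a" "a < b" shows "psi \<phi> a < psi \<phi> b"
proof -
  have "1/b < 1/a" using assms by (simp add: divide_strict_left_mono)
  hence "\<phi> (1/b) < \<phi> (1/a)" using assms by (intro phi_mono_less) auto
  thus ?thesis by (simp add: psi_def)
qed

lemma suff: assumes w: "w \<in> convex hull (W ` N0 C phat pbar)" and p: "p \<in> power_set_Pplus C phat"
  shows "psi \<phi> r0 \<le> Gfun \<phi> gamma V z w p"
proof -
  define bv :: "real^'k" where "bv = (\<chi> k. psi \<phi> (gamma$k / SIR V z p k))"
  have Gi: "Gfun \<phi> gamma V z x p = bv \<bullet> x" for x
    by (simp add: Gfun_def bv_def inner_real_vec mult.commute)
  define H where "H = {x. psi \<phi> r0 \<le> bv \<bullet> x}"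
  have cH: "convex H" unfolding H_def using convex_halfspace_ge[of "psi \<phi> r0" bv] by simp
  have sub: "W ` N0 C phat pbar \<subseteq> H" using G_W[OF _ p] by (auto simp: H_def Gi)
  have "convex hull (W ` N0 C phat pbar) \<subseteq> H" by (rule hull_minimal[of _ H convex, OF sub cH])
  thus ?thesis using w by (auto simp: H_def Gi)
qed

lemma sir_pbar: "SIR V z pbar k / gamma$k = 1/r0"
proof -
  have "gamma$k * ((V *v pbar)$k + z$k) = r0 * pbar$k" using pbar_eq by simp
  thus ?thesis using pbar_pos[rule_format, of k] gamma_pos r0_pos unfolding SIR_def
    by (metis divide_divide_eq_left mult.commute less_irrefl divide_self_if)
qed

lemma nec_p:
  assumes w: "w \<in> simplex_plus" and p: "p \<in> power_set_Pplus C phat"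
    and sad1: "\<forall>w'\<in>simplex_plus. Gfun \<phi> gamma V z w' p \<le> Gfun \<phi> gamma V z w p"
    and sad2: "\<forall>p'\<in>power_set_Pplus C phat. Gfun \<phi> gamma V z w p \<le> Gfun \<phi> gamma V z w p'"
  shows "p = pbar"
proof -
  obtain n1 where n1: "n1 \<in> N0 C phat pbar" using N0_ne by blast
  have "Gfun \<phi> gamma V z w p \<le> Gfun \<phi> gamma V z w pbar" using sad2 pbar_Pplus by blast
  also have "\<dots> = psi \<phi> r0" by (rule G_pbar[OF w])
  finally have le: "Gfun \<phi> gamma V z w p \<le> psi \<phi> r0" .
  have ppos: "\<forall>i. 0 < p$i" and pP: "p \<in> power_set_P C phat" using p by (auto simp: power_set_Pplus_def)
  have pnn: "\<forall>j. 0 \<le> p$j" using ppos by (simp add: less_imp_le)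
  have bk: "psi \<phi> (gamma$k / SIR V z p k) \<le> psi \<phi> r0" for k
  proof (rule simplex_max)
    show "\<forall>w'\<in>simplex_plus. (\<Sum>k\<in>UNIV. w'$k * psi \<phi> (gamma$k / SIR V z p k)) \<le> psi \<phi> r0"
      using sad1 le unfolding Gfun_def by force
  qed
  have ge: "\<forall>k. 1/r0 \<le> SIR V z p k / gamma$k"
  proof
    fix k
    have sp: "0 < SIR V z p k" using ppos den_pos[OF pnn, of k] by (simp add: SIR_def)
    have gk: "0 < gamma$k" using gamma_pos by simp
    have a0: "0 < gamma$k / SIR V z p k" using sp gk by simp
    have "gamma$k / SIR V z p k \<le> r0"
    proof (rule ccontr)
      assume "\<not> ?thesis"
      hence "psi \<phi> r0 < psi \<phi> (gamma$k / SIR V z p k)" using r0_pos by (intro psi_mono_less) auto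
      thus False using bk[of k] by simp
    qed
    hence "inverse r0 \<le> inverse (gamma$k / SIR V z p k)" using a0 by (rule le_imp_inverse_le)
    thus "1/r0 \<le> SIR V z p k / gamma$k" by (simp add: inverse_eq_divide)
  qed
  obtain x1 ms y where x1: "\<forall>i. 0 < x1$i" "\<forall>m. g m x1 \<le> 1" "g ms x1 = 1"
    "\<forall>i. gamma$i * ((V *v x1)$i + z$i) = r0 * x1$i"
    and y: "\<forall>i. 0 < y$i" "transpose (B ms) *v y = r0 *s y"
    using key_vec by blast
  have "p = x1" by (rule unique_opt[OF x1(1,3,4) y pP ge])
  moreover have "pbar = x1" by (rule unique_opt[OF x1(1,3,4) y pbar_in]) (simp add: sir_pbar)
  ultimately show ?thesis by simp
qed

lemma vd_eq: "Lop u \<bullet> d = (\<Sum>k\<in>UNIV. u$k * (r0 * d$k - gamma$k * (V *v d)$k))"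
proof -
  have "Lop u \<bullet> d = (\<Sum>j\<in>UNIV. r0 * u$j * d$j) - (\<Sum>j\<in>UNIV. \<Sum>i\<in>UNIV. gamma$i * V$i$j * u$i * d$j)"
    by (simp add: inner_real_vec Lop_nth left_diff_distrib sum_subtractf sum_distrib_right)
  also have "(\<Sum>j\<in>UNIV. \<Sum>i\<in>UNIV. gamma$i * V$i$j * u$i * d$j) = (\<Sum>i\<in>UNIV. u$i * gamma$i * (V *v d)$i)"
    by (subst sum.swap) (simp add: mv_nth sum_distrib_left mult_ac)
  also have "(\<Sum>j\<in>UNIV. r0 * u$j * d$j) - (\<Sum>i\<in>UNIV. u$i * gamma$i * (V *v d)$i)
      = (\<Sum>k\<in>UNIV. u$k * (r0 * d$k - gamma$k * (V *v d)$k))"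
    by (simp add: sum_subtractf[symmetric] right_diff_distrib mult_ac)
  finally show ?thesis .
qed

lemma nec_w:
  assumes w: "w \<in> simplex_plus"
    and minp: "\<forall>p\<in>power_set_Pplus C phat. Gfun \<phi> gamma V z w pbar \<le> Gfun \<phi> gamma V z w p"
  shows "w \<in> convex hull (W ` N0 C phat pbar)"
proof -
  define u :: "real^'k" where "u = (\<chi> k. w$k / pbar$k)"
  define v where "v = Lop u"
  define Sset where "Sset = (\<lambda>n. C$n) ` N0 C phat pbar"
  have finS: "finite Sset" by (simp add: Sset_def)
  have FO: "v \<bullet> d \<le> 0" if "\<forall>s\<in>Sset. s \<bullet> d \<le> 0" for d
  proof -
    have "\<forall>n\<in>N0 C phat pbar. g n d \<le> 0"
    proof
      fix n assume "n \<in> N0 C phat pbar"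
      hence "C$n \<bullet> d \<le> 0" using that by (auto simp: Sset_def)
      thus "g n d \<le> 0" using phat_pos[rule_format, of n] by (simp add: gfun_def divide_nonpos_pos)
    qed
    from first_order[OF w minp this] show ?thesis by (simp add: v_def vd_eq u_def)
  qed
  have "v \<in> convex_cone hull Sset" using farkas_cone[OF finS] FO by blast
  then obtain \<mu> where \<mu>: "\<forall>s\<in>Sset. 0 \<le> \<mu> s" "v = (\<Sum>s\<in>Sset. \<mu> s *\<^sub>R s)"
    using cone_rep[OF finS] by blast
  define ns where "ns s = (SOME n. n \<in> N0 C phat pbar \<and> C$n = s)" for s
  have ns: "ns s \<in> N0 C phat pbar \<and> C$(ns s) = s" if "s \<in> Sset" for s
  proof -
    have "\<exists>n. n \<in> N0 C phat pbar \<and> C$n = s" using that by (auto simp: Sset_def)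
    from someI_ex[OF this] show ?thesis unfolding ns_def .
  qed
  define \<beta> where "\<beta> s = \<mu> s / sig (ns s)" for s
  have \<beta>nn: "\<forall>s\<in>Sset. 0 \<le> \<beta> s"
    using \<mu>(1) ns sig_pos by (auto simp: \<beta>_def less_imp_le)
  define u' where "u' = (\<Sum>s\<in>Sset. \<beta> s *\<^sub>R yv (ns s))"
  have "Lop u' = (\<Sum>s\<in>Sset. \<beta> s *\<^sub>R Lop (yv (ns s)))" unfolding u'_def by (rule Lop_sum[OF finS])
  also have "\<dots> = (\<Sum>s\<in>Sset. \<mu> s *\<^sub>R s)"
  proof (intro sum.cong refl)
    fix s assume s: "s \<in> Sset"
    have "Lop (yv (ns s)) = sig (ns s) *\<^sub>R s" using Lop_yv[of "ns s"] ns[OF s]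
      by (simp add: scalar_mult_eq_scaleR)
    moreover have "\<beta> s * sig (ns s) = \<mu> s" using sig_pos[of "ns s"] ns[OF s] by (simp add: \<beta>_def)
    ultimately show "\<beta> s *\<^sub>R Lop (yv (ns s)) = \<mu> s *\<^sub>R s" by simp
  qed
  also have "\<dots> = Lop u" using \<mu>(2) by (simp add: v_def)
  finally have "Lop (u - u') = 0" by (simp add: Lop_diff)
  hence "u - u' = 0" by (rule Lop_inj)
  hence uu: "u = u'" by simp
  have wexp: "w = (\<Sum>s\<in>Sset. \<beta> s *\<^sub>R W (ns s))"
  proof -
    have "w$k = (\<Sum>s\<in>Sset. \<beta> s * W (ns s) $ k)" for k
    proof -
      have "w$k = u$k * pbar$k" using pbar_pos[rule_format, of k] by (simp add: u_def)
      also have "\<dots> = (\<Sum>s\<in>Sset. \<beta> s * yv (ns s) $ k) * pbar$k" by (simp add: uu u'_def)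
      also have "\<dots> = (\<Sum>s\<in>Sset. \<beta> s * W (ns s) $ k)"
        by (simp add: sum_distrib_right W_def) (simp add: mult_ac)
      finally show ?thesis .
    qed
    thus ?thesis by (simp add: vec_eq_iff)
  qed
  have bsum: "(\<Sum>s\<in>Sset. \<beta> s) = 1"
  proof -
    have "1 = (\<Sum>k\<in>UNIV. w$k)" using w by (simp add: simplex_plus_def)
    also have "\<dots> = (\<Sum>k\<in>UNIV. \<Sum>s\<in>Sset. \<beta> s * W (ns s) $ k)"
      by (subst wexp) simp
    also have "\<dots> = (\<Sum>s\<in>Sset. \<beta> s * (\<Sum>k\<in>UNIV. W (ns s) $ k))"
      by (subst sum.swap) (simp add: sum_distrib_left)
    also have "\<dots> = (\<Sum>s\<in>Sset. \<beta> s)"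
    proof (intro sum.cong refl)
      fix s assume "s \<in> Sset"
      hence "W (ns s) \<in> simplex_plus" using ns W_simplex by blast
      thus "\<beta> s * (\<Sum>k\<in>UNIV. W (ns s) $ k) = \<beta> s" by (simp add: simplex_plus_def)
    qed
    finally show ?thesis by simp
  qed
  have "(\<Sum>s\<in>Sset. \<beta> s *\<^sub>R W (ns s)) \<in> convex hull (W ` N0 C phat pbar)"
  proof (rule convex_sum[OF finS convex_convex_hull bsum])
    show "\<And>i. i \<in> Sset \<Longrightarrow> 0 \<le> \<beta> i" using \<beta>nn by blast
    show "\<And>i. i \<in> Sset \<Longrightarrow> W (ns i) \<in> convex hull (W ` N0 C phat pbar)"
      using ns by (intro hull_inc) blast
  qed
  thus ?thesis using wexp by simp
qed

lemma main_thm: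
  shows "ereal (psi \<phi> (spectral_radius (B n0)))
           = (SUP w\<in>simplex_plus. INF p\<in>power_set_Pplus C phat. ereal (Gfun \<phi> gamma V z w p))
       \<and> ereal (psi \<phi> (spectral_radius (B n0)))
           = (INF p\<in>power_set_Pplus C phat. SUP w\<in>simplex_plus. ereal (Gfun \<phi> gamma V z w p))
       \<and> (\<forall>w p. w \<in> simplex_plus \<longrightarrow> p \<in> power_set_Pplus C phat \<longrightarrow>
            (saddle_point (Gfun \<phi> gamma V z) simplex_plus (power_set_Pplus C phat) w p
             \<longleftrightarrow> p = pbar \<and>
                 w \<in> convex hull ((\<lambda>n. perron_weight (B n)) ` N0 C phat pbar)))"
proof -
  let ?G = "Gfun \<phi> gamma V z"
  let ?P = "power_set_Pplus C phat"
  have rr: "spectral_radius (B n0) = r0" by (simp add: r0_def)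
  obtain n1 where n1: "n1 \<in> N0 C phat pbar" using N0_ne by blast
  have W1: "W n1 \<in> simplex_plus" by (rule W_simplex[OF n1])
  have e1: "ereal (psi \<phi> r0) = (SUP w\<in>simplex_plus. INF p\<in>?P. ereal (?G w p))"
  proof (rule antisym)
    show "ereal (psi \<phi> r0) \<le> (SUP w\<in>simplex_plus. INF p\<in>?P. ereal (?G w p))"
    proof (rule SUP_upper2[OF W1])
      show "ereal (psi \<phi> r0) \<le> (INF p\<in>?P. ereal (?G (W n1) p))"
        by (rule INF_greatest) (simp add: G_W[OF n1])
    qed
    show "(SUP w\<in>simplex_plus. INF p\<in>?P. ereal (?G w p)) \<le> ereal (psi \<phi> r0)"
    proof (rule SUP_least)
      fix w :: "real^'k" assume w: "w \<in> simplex_plus"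
      show "(INF p\<in>?P. ereal (?G w p)) \<le> ereal (psi \<phi> r0)"
        by (rule INF_lower2[OF pbar_Pplus]) (simp add: G_pbar[OF w])
    qed
  qed
  have e2: "ereal (psi \<phi> r0) = (INF p\<in>?P. SUP w\<in>simplex_plus. ereal (?G w p))"
  proof (rule antisym)
    show "ereal (psi \<phi> r0) \<le> (INF p\<in>?P. SUP w\<in>simplex_plus. ereal (?G w p))"
    proof (rule INF_greatest)
      fix p :: "real^'k" assume p: "p \<in> ?P"
      show "ereal (psi \<phi> r0) \<le> (SUP w\<in>simplex_plus. ereal (?G w p))"
        by (rule SUP_upper2[OF W1]) (simp add: G_W[OF n1 p])
    qed
    show "(INF p\<in>?P. SUP w\<in>simplex_plus. ereal (?G w p)) \<le> ereal (psi \<phi> r0)"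
    proof (rule INF_lower2[OF pbar_Pplus])
      show "(SUP w\<in>simplex_plus. ereal (?G w pbar)) \<le> ereal (psi \<phi> r0)"
        by (rule SUP_least) (simp add: G_pbar)
    qed
  qed
  have img: "(\<lambda>n. perron_weight (B n)) ` N0 C phat pbar = W ` N0 C phat pbar"
    by (rule image_cong[OF refl]) (rule W_pw)
  have e3: "saddle_point ?G simplex_plus ?P w p \<longleftrightarrow> p = pbar \<and> w \<in> convex hull (W ` N0 C phat pbar)"
    if w: "w \<in> simplex_plus" and p: "p \<in> ?P" for w p :: "real^'k"
  proof
    assume sad: "saddle_point ?G simplex_plus ?P w p"
    have sad1: "\<forall>w'\<in>simplex_plus. ?G w' p \<le> ?G w p" and sad2: "\<forall>p'\<in>?P. ?G w p \<le> ?G w p'"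
      using sad unfolding saddle_point_def by auto
    have pp: "p = pbar" by (rule nec_p[OF w p sad1 sad2])
    have "w \<in> convex hull (W ` N0 C phat pbar)" using nec_w[OF w] sad2 pp by simp
    thus "p = pbar \<and> w \<in> convex hull (W ` N0 C phat pbar)" using pp by simp
  next
    assume h: "p = pbar \<and> w \<in> convex hull (W ` N0 C phat pbar)"
    show "saddle_point ?G simplex_plus ?P w p"
      unfolding saddle_point_def
    proof (intro conjI ballI)
      show "w \<in> simplex_plus" "p \<in> ?P" using w p by auto
      fix w' p' :: "real^'k" assume w': "w' \<in> simplex_plus" and p': "p' \<in> ?P"
      show "?G w' p \<le> ?G w p" using h G_pbar[OF w'] G_pbar[OF w] by simp
      show "?G w p \<le> ?G w p'" using h G_pbar[OF w] suff[OF _ p'] by simp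
    qed
  qed
  show ?thesis unfolding rr img using e1 e2 e3 by blast
qed

end

theorem theorem5:
  fixes C :: "real^'k^'n" and phat :: "real^'n"
    and V :: "real^'k^'k" and z gamma :: "real^'k"
    and \<phi> :: "real \<Rightarrow> real" and pbar :: "real^'k" and n0 :: 'n
  assumes K2: "CARD('k) \<ge> 2"
    and C01: "\<forall>n k. C$n$k = 0 \<or> C$n$k = 1"
    and Ccol: "\<forall>k. \<exists>n. C$n$k = 1"
    and phat_pos: "\<forall>n. 0 < phat$n"
    and V_nonneg: "\<forall>i j. 0 \<le> V$i$j"
    and V_diag: "\<forall>k. V$k$k = 0"
    and z_pos: "\<forall>k. 0 < z$k"
    and gamma_pos: "\<forall>k. 0 < gamma$k"
    and A2_deriv: "\<exists>\<phi>'. (\<forall>x>0. (\<phi> has_real_derivative \<phi>' x) (at x)) \<and> continuous_on {0<..} \<phi>'"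
    and A2_mono: "strict_mono_on {0<..} \<phi>"
    and A3: "convex_on (\<phi> ` {0<..}) (\<lambda>q. ln (the_inv_into {0<..} \<phi> q))"
    and V_irred: "irreducible_mat V"
    and pbar_in: "pbar \<in> power_set_P C phat"
    and pbar_max: "\<forall>p\<in>power_set_P C phat.
          (MIN k. SIR V z p k / gamma$k) \<le> (MIN k. SIR V z pbar k / gamma$k)"
    and n0_max: "\<forall>n. spectral_radius (Bmat gamma V z C phat n)
                     \<le> spectral_radius (Bmat gamma V z C phat n0)"
  shows "ereal (psi \<phi> (spectral_radius (Bmat gamma V z C phat n0)))
           = (SUP w\<in>simplex_plus. INF p\<in>power_set_Pplus C phat. ereal (Gfun \<phi> gamma V z w p))
       \<and> ereal (psi \<phi> (spectral_radius (Bmat gamma V z C phat n0)))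
           = (INF p\<in>power_set_Pplus C phat. SUP w\<in>simplex_plus. ereal (Gfun \<phi> gamma V z w p))
       \<and> (\<forall>w p. w \<in> simplex_plus \<longrightarrow> p \<in> power_set_Pplus C phat \<longrightarrow>
            (saddle_point (Gfun \<phi> gamma V z) simplex_plus (power_set_Pplus C phat) w p
             \<longleftrightarrow> p = pbar \<and>
                 w \<in> convex hull ((\<lambda>n. perron_weight (Bmat gamma V z C phat n)) ` N0 C phat pbar)))"
  proof -
  have m: "model C phat V z gamma \<phi> pbar n0"
    unfolding model_def
    using K2 C01 Ccol phat_pos V_nonneg V_diag z_pos gamma_pos A2_deriv A2_mono A3 V_irred
      pbar_in pbar_max n0_max by blast
  show ?thesis by (rule model.main_thm[OF m])
qed

end
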